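(* Let $U\subseteq L_{\mathrm{up}}$ be a set of up-links such that the sets $P_u$, $u\in U$, are pairwise disjoint, and let $(C,A)$ be a (weakly) connected component of the dependency graph of $U$ (which is an arborescence). If $\ell_1,\ell_2\in C$ satisfy $V_{\ell_1}\cap V_{\ell_2}\neq\emptyset$, then $\ell_1$ and $\ell_2$ have an ancestry relationship in the arborescence $(C,A)$, i.e. $\ell_1$ is an ancestor of $\ell_2$ or $\ell_2$ is an ancestor of $\ell_1$ in $(C,A)$.
   Context: Let $(G=(V,E),L,w)$ be a WTAP instance (spanning tree $G$, links $L\subseteq\binom V2$, weights $w>0$) with a fixed root $r\in V$, and let $F\subseteq L$ be a WTAP solution, i.e. $\bigcup_{\ell\in F}P_\ell=E$, where $P_\ell$ is the edge set of the tree path between the endpoints of $\ell$ and $V_\ell$ its vertex set. Ancestors of $v$ are the vertices on the $r$-$v$ path in $G$ (including $r$ and $v$); descendants are defined reciprocally. $\mathrm{apex}(\ell)$ is the vertex of $V_\ell$ closest to $r$. An up-link is a link $\{t,b\}$ with $t$ an ancestor of $b$; $L_{\mathrm{up}}$ is the set of up-links. For $v\in V$ let $B_v=\{\ell\in F\colon\mathrm{apex}(\ell)\text{ is a descendant of }v\}$. For an up-link $u=\{t,b\}$ with $t$ an ancestor of $b$, let $v_u$ be the ancestor of $t$ farthest from $r$ such that $P_u\subseteq\bigcup_{\ell\in B_{v_u}}P_\ell$, and fix $F_u\subseteq B_{v_u}$ inclusion-wise minimal with $P_u\subseteq\bigcup_{\ell\in F_u}P_\ell$. For $\ell\in F_u$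 let $P_{u,\ell}=P_u\setminus\bigcup_{\bar\ell\in F_u\setminus\{\ell\}}P_{\bar\ell}$; these sets are nonempty, pairwise disjoint, and each is the edge set of a path. Define $\ell_1\prec_u\ell_2$ iff the edges of $P_{u,\ell_1}$ appear before those of $P_{u,\ell_2}$ on the $t$-$b$ path in $G$. If $\ell_1\prec_u\cdots\prec_u\ell_q$ are the links of $F_u$, let $A_u=\{(\ell_i,\ell_{i+1})\colon i=1,\dots,q-1\}$. The dependency graph of $U\subseteq L_{\mathrm{up}}$ is the directed graph with vertex set $F$ whose arc set is the disjoint union of the $A_u$, $u\in U$. When the $P_u$, $u\in U$, are pairwise disjoint, this graph is a branching (no directed cycles, in-degrees at most one), so each weakly connected component is an arborescence. *)

theory Defs
  imports Complex_Main
begin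

text \<open>Vertices have type 'a; an (undirected) edge or a link is a 2-element set of vertices.\<close>

definition path_edges :: "'a list \<Rightarrow> 'a set set" where
  "path_edges p = {{p ! i, p ! Suc i} | i. Suc i < length p}"

definition is_vpath :: "'a set set \<Rightarrow> 'a list \<Rightarrow> bool" where
  "is_vpath E p \<longleftrightarrow> p \<noteq> [] \<and> distinct p \<and> (\<forall>i. Suc i < length p \<longrightarrow> {p ! i, p ! Suc i} \<in> E)"

definition is_spanning_tree :: "'a set \<Rightarrow> 'a set set \<Rightarrow> bool" where
  "is_spanning_tree V E \<longleftrightarrow>
     finite V \<and> V \<noteq> {} \<and>
     E \<subseteq> {{x, y} | x y. x \<in> V \<and> y \<in> V \<and> x \<noteq> y} \<and>
     (\<forall>x\<in>V. \<forall>y\<in>V. \<exists>p. is_vpath E p \<and> hd p = x \<and> last p = y) \<and>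
     \<not> (\<exists>p. is_vpath E p \<and> length p \<ge> 3 \<and> {last p, hd p} \<in> E)"

definition tpath :: "'a set set \<Rightarrow> 'a \<Rightarrow> 'a \<Rightarrow> 'a list" where
  "tpath E s t = (THE p. is_vpath E p \<and> hd p = s \<and> last p = t)"

definition Vl :: "'a set set \<Rightarrow> 'a set \<Rightarrow> 'a set" where
  "Vl E l = \<Union>{set (tpath E x y) | x y. l = {x, y}}"

definition Pl :: "'a set set \<Rightarrow> 'a set \<Rightarrow> 'a set set" where
  "Pl E l = \<Union>{path_edges (tpath E x y) | x y. l = {x, y}}"

definition anc :: "'a set set \<Rightarrow> 'a \<Rightarrow> 'a \<Rightarrow> 'a set" where
  "anc E r v = set (tpath E r v)"

definition desc :: "'a set \<Rightarrow> 'a set set \<Rightarrow> 'a \<Rightarrow> 'a \<Rightarrow> 'a set" where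
  "desc V E r v = {x \<in> V. v \<in> anc E r x}"

text \<open>Distance from the root (number of vertices on the root path).\<close>
definition depth :: "'a set set \<Rightarrow> 'a \<Rightarrow> 'a \<Rightarrow> nat" where
  "depth E r v = length (tpath E r v)"

definition apex :: "'a set set \<Rightarrow> 'a \<Rightarrow> 'a set \<Rightarrow> 'a" where
  "apex E r l = (THE x. x \<in> Vl E l \<and> (\<forall>y\<in>Vl E l. depth E r x \<le> depth E r y))"

definition is_up_link :: "'a set set \<Rightarrow> 'a \<Rightarrow> 'a set \<Rightarrow> bool" where
  "is_up_link E r l \<longleftrightarrow> (\<exists>t b. l = {t, b} \<and> t \<noteq> b \<and> t \<in> anc E r b)"

definition L_up :: "'a set set \<Rightarrow> 'a \<Rightarrow> 'a set set \<Rightarrow> 'a set set" where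
  "L_up E r L = {l \<in> L. is_up_link E r l}"

definition up_top :: "'a set set \<Rightarrow> 'a \<Rightarrow> 'a set \<Rightarrow> 'a" where
  "up_top E r u = (THE t. \<exists>b. u = {t, b} \<and> t \<noteq> b \<and> t \<in> anc E r b)"

definition up_bot :: "'a set set \<Rightarrow> 'a \<Rightarrow> 'a set \<Rightarrow> 'a" where
  "up_bot E r u = (THE b. \<exists>t. u = {t, b} \<and> t \<noteq> b \<and> t \<in> anc E r b)"

definition Bset :: "'a set \<Rightarrow> 'a set set \<Rightarrow> 'a \<Rightarrow> 'a set set \<Rightarrow> 'a \<Rightarrow> 'a set set" where
  "Bset V E r F v = {l \<in> F. apex E r l \<in> desc V E r v}"

definition v_of :: "'a set \<Rightarrow> 'a set set \<Rightarrow> 'a \<Rightarrow> 'a set set \<Rightarrow> 'a set \<Rightarrow> 'a" where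
  "v_of V E r F u = (THE v. v \<in> anc E r (up_top E r u)
      \<and> Pl E u \<subseteq> \<Union>(Pl E ` Bset V E r F v)
      \<and> (\<forall>v'\<in>anc E r (up_top E r u). Pl E u \<subseteq> \<Union>(Pl E ` Bset V E r F v')
            \<longrightarrow> depth E r v' \<le> depth E r v))"

definition valid_Fu :: "'a set \<Rightarrow> 'a set set \<Rightarrow> 'a \<Rightarrow> 'a set set \<Rightarrow> 'a set \<Rightarrow> 'a set set \<Rightarrow> bool" where
  "valid_Fu V E r F u S \<longleftrightarrow>
     S \<subseteq> Bset V E r F (v_of V E r F u) \<and> Pl E u \<subseteq> \<Union>(Pl E ` S) \<and>
     (\<forall>S'. S' \<subset> S \<longrightarrow> \<not> Pl E u \<subseteq> \<Union>(Pl E ` S'))"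

definition Pul :: "'a set set \<Rightarrow> 'a set \<Rightarrow> 'a set set \<Rightarrow> 'a set \<Rightarrow> 'a set set" where
  "Pul E u S l = Pl E u - \<Union>(Pl E ` (S - {l}))"

definition prec_u :: "'a set set \<Rightarrow> 'a \<Rightarrow> 'a set \<Rightarrow> 'a set set \<Rightarrow> 'a set \<Rightarrow> 'a set \<Rightarrow> bool" where
  "prec_u E r u S l1 l2 \<longleftrightarrow>
     (let p = tpath E (up_top E r u) (up_bot E r u) in
      \<forall>e1\<in>Pul E u S l1. \<forall>e2\<in>Pul E u S l2. \<forall>i j.
        Suc i < length p \<longrightarrow> Suc j < length p \<longrightarrow>
        e1 = {p ! i, p ! Suc i} \<longrightarrow> e2 = {p ! j, p ! Suc j} \<longrightarrow> i < j)"

definition A_u :: "'a set set \<Rightarrow> 'a \<Rightarrow> 'a set \<Rightarrow> 'a set set \<Rightarrow> ('a set \<times> 'a set) set" where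
  "A_u E r u S = {(l1, l2). l1 \<in> S \<and> l2 \<in> S \<and> l1 \<noteq> l2 \<and> prec_u E r u S l1 l2 \<and>
      \<not> (\<exists>l\<in>S. l \<noteq> l1 \<and> l \<noteq> l2 \<and> prec_u E r u S l1 l \<and> prec_u E r u S l l2)}"

text \<open>Arc set of the dependency graph of U (vertex set F), for the choice Fsel u = F_u.\<close>
definition dep_arcs :: "'a set set \<Rightarrow> 'a \<Rightarrow> 'a set set \<Rightarrow> ('a set \<Rightarrow> 'a set set) \<Rightarrow> ('a set \<times> 'a set) set" where
  "dep_arcs E r U Fsel = (\<Union>u\<in>U. A_u E r u (Fsel u))"

end

theory Submission
  imports Defs
begin


locale wtree =
  fixes V :: "'a set" and E :: "'a set set" and r :: 'a
  assumes tree: "is_spanning_tree V E" and root: "r \<in> V"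
begin

lemma finV: "finite V" using tree unfolding is_spanning_tree_def by blast
lemma Esub: "E \<subseteq> {{x, y} | x y. x \<in> V \<and> y \<in> V \<and> x \<noteq> y}"
  using tree unfolding is_spanning_tree_def by blast
lemma conn: "x \<in> V \<Longrightarrow> y \<in> V \<Longrightarrow> \<exists>p. is_vpath E p \<and> hd p = x \<and> last p = y"
  using tree unfolding is_spanning_tree_def by blast
lemma acyc: "is_vpath E p \<Longrightarrow> length p \<ge> 3 \<Longrightarrow> {last p, hd p} \<in> E \<Longrightarrow> False"
  using tree unfolding is_spanning_tree_def by blast

lemma edgeV: "{x, y} \<in> E \<Longrightarrow> x \<in> V \<and> y \<in> V \<and> x \<noteq> y"
proof -
  assume "{x, y} \<in> E"
  then obtain a b where ab: "{x,y} = {a,b}" "a \<in> V" "b \<in> V" "a \<noteq> b" using Esub by blast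
  then show ?thesis by (metis doubleton_eq_iff)
qed

lemma vpath_iff: "is_vpath E p \<longleftrightarrow> p \<noteq> [] \<and> distinct p \<and> successively (\<lambda>x y. {x, y} \<in> E) p"
  unfolding is_vpath_def successively_conv_nth by blast

lemma succ_prefix: "successively P (xs @ ys) \<Longrightarrow> successively P xs"
  by (simp add: successively_append_iff)

lemma vpath_unique:
  assumes "is_vpath E p" "is_vpath E q" "hd p = hd q" "last p = last q"
  shows "p = q"
  using assms
proof (induction p arbitrary: q)
  case Nil then show ?case by (simp add: is_vpath_def)
next
  case (Cons x p')
  have dq: "distinct q" "q \<noteq> []" "successively (\<lambda>x y. {x, y} \<in> E) q" using Cons.prems(2) vpath_iff by auto
  have dp: "distinct (x # p')" "successively (\<lambda>x y. {x, y} \<in> E) (x # p')" using Cons.prems(1) vpath_iff by auto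
  obtain q' where q: "q = x # q'" using dq Cons.prems(3) by (cases q) auto
  show ?case
  proof (cases "p' = []")
    case True
    then have "last q = x" using Cons.prems(4) by simp
    then have "q' = []" using dq q by (metis distinct.simps(2) last.simps last_in_set)
    then show ?thesis using q True by simp
  next
    case pne: False
    have qne: "q' \<noteq> []"
    proof
      assume "q' = []"
      then have "last p' = x" using Cons.prems(4) q pne by simp
      then show False using dp pne by (metis distinct.simps(2) last_in_set)
    qed
    have lq: "last p' = last q'" using Cons.prems(4) q pne qne by simp
    show ?thesis
    proof (cases "hd p' = hd q'")
      case True
      have "is_vpath E p'" using dp pne vpath_iff by (auto simp: successively_Cons)
      moreover have "is_vpath E q'" using dq q qne vpath_iff by (auto simp: successively_Cons)
      ultimately have "p' = q'" using Cons.IH True lq by blast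
      then show ?thesis using q by simp
    next
      case False
      have "\<exists>v\<in>set p'. v \<in> set q'" using lq pne qne by (metis last_in_set)
      then obtain xs w ys where sp: "p' = xs @ w # ys" "w \<in> set q'" "\<forall>y\<in>set xs. y \<notin> set q'"
        using split_list_first_prop[of p' "\<lambda>v. v \<in> set q'"] by blast
      obtain as bs where sq: "q' = as @ w # bs" using sp(2) split_list by metis
      define c where "c = (x # xs) @ rev (as @ [w])"
      have d1: "x \<notin> set xs" "x \<noteq> w" "w \<notin> set xs" "distinct xs" using dp(1) sp(1) by auto
      have d2: "x \<notin> set as" "w \<notin> set as" "distinct as" using dq(1) q sq by auto
      have d3: "set xs \<inter> set as = {}" using sp(3) sq by auto
      have "distinct c" unfolding c_def using d1 d2 d3 by auto
      moreover have "successively (\<lambda>x y. {x, y} \<in> E) c"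
      proof -
        have s1: "successively (\<lambda>x y. {x, y} \<in> E) (x # xs @ [w])"
          using dp(2) sp(1) succ_prefix[of _ "x # xs @ [w]" ys] by simp
        have s2: "successively (\<lambda>x y. {x, y} \<in> E) (as @ [w])"
          using dq(3) q sq succ_prefix[of _ "x # as @ [w]" bs] by (simp add: successively_Cons split: if_splits)
        have s2': "successively (\<lambda>x y. {x, y} \<in> E) (rev (as @ [w]))"
          unfolding successively_rev using s2 by (simp add: insert_commute)
        have s1': "successively (\<lambda>x y. {x, y} \<in> E) (x # xs)" using s1 succ_prefix[of _ "x # xs" "[w]"] by simp
        have "{last (x # xs), w} \<in> E" using s1 successively_append_iff[of _ "x # xs" "[w]"] by simp
        then show ?thesis unfolding c_def using s1' s2' successively_append_iff[of _ "x # xs" "rev (as @ [w])"] by simp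
      qed
      moreover have "length c \<ge> 3"
      proof -
        have "xs \<noteq> [] \<or> as \<noteq> []"
        proof (rule ccontr)
          assume "\<not> (xs \<noteq> [] \<or> as \<noteq> [])"
          then have "hd p' = w" "hd q' = w" using sp sq by auto
          then show False using False by simp
        qed
        then have "length xs + length as \<ge> 1" by (metis One_nat_def Suc_leI add_gr_0 length_greater_0_conv)
        then show ?thesis unfolding c_def by simp
      qed
      moreover have "{last c, hd c} \<in> E"
      proof -
        have "last c = hd q'" unfolding c_def using sq by (cases as) auto
        moreover have "{x, hd q'} \<in> E" using dq(3) q qne by (cases q') auto
        ultimately show ?thesis unfolding c_def by (simp add: insert_commute)
      qed
      ultimately have "is_vpath E c" "length c \<ge> 3" "{last c, hd c} \<in> E" unfolding vpath_iff c_def by auto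
      then show ?thesis using acyc by blast
    qed
  qed
qed

lemma vpath_V: assumes "is_vpath E p" "hd p \<in> V" shows "set p \<subseteq> V"
proof
  fix v assume "v \<in> set p"
  then obtain i where i: "i < length p" "p ! i = v" by (auto simp: in_set_conv_nth)
  show "v \<in> V"
  proof (cases "Suc i < length p")
    case True
    then have "{p ! i, p ! Suc i} \<in> E" using assms(1) unfolding is_vpath_def by blast
    then show ?thesis using edgeV i by blast
  next
    case False
    show ?thesis
    proof (cases i)
      case 0 then show ?thesis using assms i by (metis hd_conv_nth length_greater_0_conv list.size(3) not_less0)
    next
      case (Suc j)
      then have "{p ! j, p ! Suc j} \<in> E" using assms(1) i unfolding is_vpath_def by blast
      then show ?thesis using edgeV i Suc by blast
    qed
  qed
qed

lemma tpath_eq: "is_vpath E p \<Longrightarrow> tpath E (hd p) (last p) = p"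
  unfolding tpath_def by (rule the_equality) (auto intro: vpath_unique)

lemma tpath_eq': "is_vpath E p \<Longrightarrow> hd p = x \<Longrightarrow> last p = y \<Longrightarrow> tpath E x y = p"
  using tpath_eq by blast

lemma tpath_props:
  assumes "x \<in> V" "y \<in> V"
  shows "is_vpath E (tpath E x y)" "hd (tpath E x y) = x" "last (tpath E x y) = y"
proof -
  obtain p where "is_vpath E p" "hd p = x" "last p = y" using conn assms by blast
  then have "tpath E x y = p" using tpath_eq by blast
  then show "is_vpath E (tpath E x y)" "hd (tpath E x y) = x" "last (tpath E x y) = y"
    using \<open>is_vpath E p\<close> \<open>hd p = x\<close> \<open>last p = y\<close> by auto
qed

lemma tpath_V: "x \<in> V \<Longrightarrow> y \<in> V \<Longrightarrow> set (tpath E x y) \<subseteq> V"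
  using tpath_props vpath_V by metis

lemma vpath_take: "is_vpath E p \<Longrightarrow> 0 < n \<Longrightarrow> is_vpath E (take n p)"
  unfolding is_vpath_def by auto

lemma vpath_drop: "is_vpath E p \<Longrightarrow> n < length p \<Longrightarrow> is_vpath E (drop n p)"
  unfolding is_vpath_def by auto

lemma vpath_rev: "is_vpath E p \<Longrightarrow> is_vpath E (rev p)"
  unfolding vpath_iff by (simp add: insert_commute)

lemma last_take_Suc: "i < length xs \<Longrightarrow> last (take (Suc i) xs) = xs ! i"
  by (simp add: take_Suc_conv_app_nth)

abbreviation rp where "rp v \<equiv> tpath E r v"

lemma rp_props: assumes "v \<in> V" shows "is_vpath E (rp v)" "hd (rp v) = r" "last (rp v) = v" "rp v \<noteq> []"
  using tpath_props[OF root assms] by (auto simp: is_vpath_def)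

lemma anc_V: "v \<in> V \<Longrightarrow> anc E r v \<subseteq> V"
  unfolding anc_def using tpath_V root by blast

lemma depth_pos: "v \<in> V \<Longrightarrow> depth E r v \<ge> 1"
  unfolding depth_def using rp_props by (simp add: Suc_leI)

lemma rp_take: assumes "v \<in> V" "i < depth E r v"
  shows "rp (rp v ! i) = take (Suc i) (rp v)"
proof -
  have "is_vpath E (take (Suc i) (rp v))" using vpath_take rp_props assms by blast
  moreover have "hd (take (Suc i) (rp v)) = r" using rp_props[OF assms(1)] by simp
  moreover have "last (take (Suc i) (rp v)) = rp v ! i" using assms last_take_Suc unfolding depth_def by blast
  ultimately show ?thesis using tpath_eq' by blast
qed

lemma depth_nth: "v \<in> V \<Longrightarrow> i < depth E r v \<Longrightarrow> depth E r (rp v ! i) = Suc i"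
  using rp_take unfolding depth_def by simp

lemma anc_take: assumes "v \<in> V" "w \<in> anc E r v" shows "rp w = take (depth E r w) (rp v)"
proof -
  obtain i where "i < depth E r v" "rp v ! i = w" using assms(2) unfolding anc_def depth_def by (auto simp: in_set_conv_nth)
  then show ?thesis using rp_take depth_nth assms(1) by metis
qed

lemma anc_refl: "v \<in> V \<Longrightarrow> v \<in> anc E r v"
  unfolding anc_def using rp_props by (metis last_in_set)

lemma r_anc: "v \<in> V \<Longrightarrow> r \<in> anc E r v"
  unfolding anc_def using rp_props by (metis hd_in_set)

lemma anc_depth: assumes "v \<in> V" "w \<in> anc E r v" shows "depth E r w \<le> depth E r v"
  using anc_take[OF assms] unfolding depth_def by (metis length_take min.bounded_iff nle_le)

lemma anc_trans: assumes "v \<in> V" "w \<in> anc E r v" "u \<in> anc E r w" shows "u \<in> anc E r v"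
proof -
  have "rp w = take (depth E r w) (rp v)" using anc_take assms by blast
  then show ?thesis using assms(3) unfolding anc_def by (metis in_set_takeD)
qed

lemma anc_eqd: assumes "v \<in> V" "w \<in> anc E r v" "depth E r w = depth E r v" shows "w = v"
proof -
  have wV: "w \<in> V" using anc_V assms by blast
  have "rp w = rp v" using anc_take[OF assms(1,2)] assms(3) unfolding depth_def by simp
  then show ?thesis using rp_props wV assms(1) by metis
qed

lemma anc_antisym: assumes "v \<in> V" "w \<in> anc E r v" "v \<in> anc E r w" shows "w = v"
proof -
  have wV: "w \<in> V" using anc_V assms by blast
  show ?thesis using anc_depth[OF assms(1,2)] anc_depth[OF wV assms(3)] anc_eqd[OF assms(1,2)] by simp
qed

lemma anc_less: assumes "v \<in> V" "w \<in> anc E r v" "w \<noteq> v" shows "depth E r w < depth E r v"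
  using anc_depth[OF assms(1,2)] anc_eqd[OF assms(1,2)] assms(3) by fastforce

lemma anc_lin: assumes "v \<in> V" "a \<in> anc E r v" "b \<in> anc E r v" shows "a \<in> anc E r b \<or> b \<in> anc E r a"
proof -
  have aV: "a \<in> V" and bV: "b \<in> V" using anc_V assms by auto
  have ra: "rp a = take (depth E r a) (rp v)" and rb: "rp b = take (depth E r b) (rp v)" using anc_take assms by auto
  show ?thesis
  proof (cases "depth E r a \<le> depth E r b")
    case True
    then have "rp a = take (depth E r a) (rp b)" using ra rb by (simp add: min_absorb1)
    then have "a \<in> set (rp b)" using anc_refl[OF aV] unfolding anc_def by (metis in_set_takeD)
    then show ?thesis unfolding anc_def by blast
  next
    case False
    then have "rp b = take (depth E r b) (rp a)" using ra rb by (simp add: min_absorb1)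
    then have "b \<in> set (rp a)" using anc_refl[OF bV] unfolding anc_def by (metis in_set_takeD)
    then show ?thesis unfolding anc_def by blast
  qed
qed

lemma rp_r: "rp r = [r]"
proof -
  have "is_vpath E [r]" unfolding is_vpath_def by simp
  then show ?thesis using tpath_eq'[of "[r]" r r] by simp
qed

lemma depth_r: "depth E r r = 1" unfolding depth_def using rp_r by simp

lemma depth_one: "v \<in> V \<Longrightarrow> depth E r v = 1 \<Longrightarrow> v = r"
  using anc_eqd[of v r] r_anc[of v] depth_r by simp

lemma anc_r: "w \<in> anc E r r \<Longrightarrow> w = r" unfolding anc_def using rp_r by simp

definition par where "par v = rp v ! (depth E r v - 2)"

lemma depth_ge2: "v \<in> V \<Longrightarrow> v \<noteq> r \<Longrightarrow> depth E r v \<ge> 2"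
  using depth_pos depth_one by fastforce

lemma rp_par: assumes "v \<in> V" "v \<noteq> r"
  shows "rp v = rp (par v) @ [v]" "depth E r (par v) = depth E r v - 1" "par v \<in> anc E r v"
    "par v \<in> V" "par v \<noteq> v" "{par v, v} \<in> E"
proof -
  have d2: "depth E r v \<ge> 2" using depth_ge2 assms by blast
  have i: "depth E r v - 2 < depth E r v" using d2 by simp
  have sd: "Suc (depth E r v - 2) = depth E r v - 1" using d2 by simp
  have rt: "rp (par v) = take (depth E r v - 1) (rp v)" unfolding par_def using rp_take[OF assms(1) i] sd by simp
  have "rp v = butlast (rp v) @ [last (rp v)]" using rp_props(4)[OF assms(1)] by simp
  also have "butlast (rp v) = take (depth E r v - 1) (rp v)" unfolding depth_def by (simp add: butlast_conv_take)
  finally show "rp v = rp (par v) @ [v]" using rt rp_props(3)[OF assms(1)] by simp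
  show dp: "depth E r (par v) = depth E r v - 1" unfolding par_def using depth_nth[OF assms(1) i] d2 by simp
  show pa: "par v \<in> anc E r v" unfolding par_def anc_def using i unfolding depth_def by simp
  show "par v \<in> V" using pa anc_V assms by blast
  show "par v \<noteq> v" using dp d2 by auto
  have "Suc (depth E r v - 2) < length (rp v)" using d2 unfolding depth_def by simp
  then have "{rp v ! (depth E r v - 2), rp v ! Suc (depth E r v - 2)} \<in> E"
    using rp_props(1)[OF assms(1)] unfolding is_vpath_def by blast
  moreover have "rp v ! Suc (depth E r v - 2) = v"
  proof -
    have "rp v ! (length (rp v) - 1) = v" using rp_props[OF assms(1)] by (metis last_conv_nth)
    then show ?thesis using sd unfolding depth_def by simp
  qed
  ultimately show "{par v, v} \<in> E" unfolding par_def by simp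
qed

lemma anc_par_eq: assumes "v \<in> V" "v \<noteq> r" shows "anc E r v = insert v (anc E r (par v))"
  using rp_par(1)[OF assms] unfolding anc_def by auto

lemma anc_par: "v \<in> V \<Longrightarrow> v \<noteq> r \<Longrightarrow> w \<in> anc E r v \<Longrightarrow> w \<noteq> v \<Longrightarrow> w \<in> anc E r (par v)"
  using anc_par_eq by blast

lemma edge_child: assumes "{x, y} \<in> E" "y \<notin> anc E r x" shows "y \<noteq> r \<and> par y = x"
proof -
  have xy: "x \<in> V" "y \<in> V" "x \<noteq> y" using edgeV assms by auto
  have "is_vpath E (rp x @ [y])"
    using rp_props[OF xy(1)] assms unfolding vpath_iff anc_def
    by (auto simp: successively_append_iff)
  moreover have "hd (rp x @ [y]) = r" "last (rp x @ [y]) = y" using rp_props[OF xy(1)] by auto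
  ultimately have ry: "rp y = rp x @ [y]" using tpath_eq' by blast
  have yr: "y \<noteq> r" using assms(2) r_anc xy by blast
  have "par y = (rp x @ [y]) ! (length (rp x) - 1)" unfolding par_def depth_def ry by simp
  also have "\<dots> = last (rp x)" using rp_props(4)[OF xy(1)] by (simp add: last_conv_nth nth_append)
  also have "\<dots> = x" using rp_props(3)[OF xy(1)] .
  finally show ?thesis using yr by blast
qed

lemma edge_cases: assumes "{x, y} \<in> E" shows "(y \<noteq> r \<and> par y = x) \<or> (x \<noteq> r \<and> par x = y)"
proof -
  have xy: "x \<in> V" "y \<in> V" "x \<noteq> y" using edgeV assms by auto
  have e2: "{y, x} \<in> E" using assms by (simp add: insert_commute)
  show ?thesis
  proof (cases "y \<in> anc E r x")
    case False then show ?thesis using edge_child assms by blast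
  next
    case True
    show ?thesis
    proof (cases "x \<in> anc E r y")
      case False then show ?thesis using edge_child e2 by blast
    next
      case True
      then show ?thesis using \<open>y \<in> anc E r x\<close> anc_antisym xy by blast
    qed
  qed
qed

lemma top_exists: "successively (\<lambda>x y. {x, y} \<in> E) q \<Longrightarrow> q \<noteq> [] \<Longrightarrow> set q \<subseteq> V \<Longrightarrow>
    \<exists>a\<in>set q. \<forall>w\<in>set q. a \<in> anc E r w"
proof (induction q)
  case Nil then show ?case by simp
next
  case (Cons x q')
  show ?case
  proof (cases "q' = []")
    case True then show ?thesis using Cons.prems anc_refl by auto
  next
    case False
    then obtain a' where a': "a' \<in> set q'" "\<forall>w\<in>set q'. a' \<in> anc E r w"
      using Cons by (auto simp: successively_Cons)
    define h where "h = hd q'"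
    have hq: "h \<in> set q'" using False h_def by simp
    have e: "{x, h} \<in> E" using Cons.prems(1) False h_def by (cases q') auto
    have xV: "x \<in> V" and hV: "h \<in> V" using edgeV e by auto
    have qV: "set q' \<subseteq> V" using Cons.prems by auto
    from edge_cases[OF e] show ?thesis
    proof
      assume c: "h \<noteq> r \<and> par h = x"
      show ?thesis
      proof (cases "a' = h")
        case True
        have "\<forall>w\<in>set q'. x \<in> anc E r w"
        proof
          fix w assume w: "w \<in> set q'"
          then have "h \<in> anc E r w" using a' True by simp
          moreover have "x \<in> anc E r h" using rp_par(3)[OF hV] c by simp
          ultimately show "x \<in> anc E r w" using anc_trans qV w by blast
        qed
        then show ?thesis using anc_refl xV by auto
      next
        case False
        then have "a' \<in> anc E r x" using anc_par[OF hV] c a' hq by fastforce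
        then show ?thesis using a' by auto
      qed
    next
      assume c: "x \<noteq> r \<and> par x = h"
      have "a' \<in> anc E r h" using a' hq by blast
      then have "a' \<in> anc E r x" using rp_par(3)[OF xV] c anc_trans xV by metis
      then show ?thesis using a' by auto
    qed
  qed
qed

lemma convex1: "successively (\<lambda>x y. {x, y} \<in> E) q \<Longrightarrow> q \<noteq> [] \<Longrightarrow> set q \<subseteq> V \<Longrightarrow> last q = a \<Longrightarrow>
   z \<in> set q \<Longrightarrow> a \<in> anc E r w \<Longrightarrow> w \<in> anc E r z \<Longrightarrow> w \<in> set q"
proof (induction q arbitrary: z)
  case Nil then show ?case by simp
next
  case (Cons x q')
  show ?case
  proof (cases "q' = []")
    case True
    then have "z = a" using Cons.prems by simp
    then have "w = a" using anc_antisym Cons.prems True by auto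
    then show ?thesis using Cons.prems True by simp
  next
    case False
    have IH: "\<And>z. z \<in> set q' \<Longrightarrow> w \<in> anc E r z \<Longrightarrow> w \<in> set q'"
      using Cons.IH Cons.prems False by (auto simp: successively_Cons)
    show ?thesis
    proof (cases "z \<in> set q'")
      case True then show ?thesis using IH Cons.prems by simp
    next
      case zx: False
      then have zx: "z = x" using Cons.prems by simp
      define h where "h = hd q'"
      have hq: "h \<in> set q'" using False h_def by simp
      have e: "{x, h} \<in> E" using Cons.prems(1) False h_def by (cases q') auto
      have xV: "x \<in> V" and hV: "h \<in> V" using edgeV e by auto
      from edge_cases[OF e] show ?thesis
      proof
        assume c: "h \<noteq> r \<and> par h = x"
        then have "x \<in> anc E r h" using rp_par(3)[OF hV] by simp
        then have "w \<in> anc E r h" using anc_trans hV Cons.prems zx by blast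
        then show ?thesis using IH hq by simp
      next
        assume c: "x \<noteq> r \<and> par x = h"
        show ?thesis
        proof (cases "w = x")
          case True then show ?thesis by simp
        next
          case False
          then have "w \<in> anc E r h" using anc_par[OF xV] c Cons.prems zx by blast
          then show ?thesis using IH hq by simp
        qed
      qed
    qed
  qed
qed

lemma convex_path:
  assumes "successively (\<lambda>x y. {x, y} \<in> E) q" "set q \<subseteq> V" "z \<in> set q" "a \<in> set q"
    "a \<in> anc E r w" "w \<in> anc E r z"
  shows "w \<in> set q"
proof -
  obtain q1 q2 where q: "q = q1 @ a # q2" using assms(4) split_list by metis
  show ?thesis
  proof (cases "z \<in> set (q1 @ [a])")
    case True
    have "successively (\<lambda>x y. {x, y} \<in> E) (q1 @ [a])" using assms(1) q succ_prefix[of _ "q1 @ [a]" q2] by simp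
    then have "w \<in> set (q1 @ [a])" using convex1[of "q1 @ [a]" a z w] True assms q by auto
    then show ?thesis using q by auto
  next
    case False
    then have z2: "z \<in> set (rev (a # q2))" using assms(3) q by auto
    have "successively (\<lambda>x y. {x, y} \<in> E) (a # q2)" using assms(1) q by (simp add: successively_append_iff)
    then have "successively (\<lambda>x y. {x, y} \<in> E) (rev (a # q2))" unfolding successively_rev by (simp add: insert_commute)
    then have "w \<in> set (rev (a # q2))" using convex1[of "rev (a # q2)" a z w] z2 assms q by auto
    then show ?thesis using q by auto
  qed
qed

lemma adj_in_path:
  assumes "is_vpath E q" "i < j" "j < length q" "{q ! i, q ! j} \<in> E"
  shows "j = Suc i"
proof (rule ccontr)
  assume ne: "j \<noteq> Suc i"
  define c where "c = take (Suc (j - i)) (drop i q)"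
  have "is_vpath E c" unfolding c_def using vpath_take vpath_drop assms by simp
  moreover have "length c \<ge> 3" unfolding c_def using assms ne by auto
  moreover have "hd c = q ! i" unfolding c_def using assms by (simp add: hd_drop_conv_nth)
  moreover have "last c = q ! j" unfolding c_def using assms last_take_Suc[of "j - i" "drop i q"] by simp
  ultimately show False using acyc assms(4) by (metis insert_commute)
qed

definition edg where "edg w = {par w, w}"

lemma path_edges_char:
  assumes "is_vpath E q" "set q \<subseteq> V" "a \<in> set q" "\<forall>w\<in>set q. a \<in> anc E r w"
  shows "path_edges q = edg ` (set q - {a})"
proof
  show "path_edges q \<subseteq> edg ` (set q - {a})"
  proof
    fix e assume "e \<in> path_edges q"
    then obtain i where i: "e = {q ! i, q ! Suc i}" "Suc i < length q" unfolding path_edges_def by blast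
    have eE: "e \<in> E" using i assms(1) unfolding is_vpath_def by blast
    have inq: "q ! i \<in> set q" "q ! Suc i \<in> set q" using i by auto
    have notop: "w \<in> set q \<Longrightarrow> w \<noteq> r \<Longrightarrow> par w \<in> set q \<Longrightarrow> w \<noteq> a" for w
    proof
      assume w: "w \<in> set q" "w \<noteq> r" "par w \<in> set q" "w = a"
      have wV: "w \<in> V" using w assms(2) by blast
      have "a \<in> anc E r (par w)" using assms(4) w by blast
      moreover have "par w \<in> anc E r w" using rp_par[OF wV w(2)] by blast
      ultimately have "par w = w" using anc_antisym wV w(4) by blast
      then show False using rp_par[OF wV w(2)] by blast
    qed
    have disj: "(q ! Suc i \<noteq> r \<and> par (q ! Suc i) = q ! i) \<or> (q ! i \<noteq> r \<and> par (q ! i) = q ! Suc i)"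
      using edge_cases[of "q ! i" "q ! Suc i"] eE i(1) by simp
    then show "e \<in> edg ` (set q - {a})"
    proof
      assume c: "q ! Suc i \<noteq> r \<and> par (q ! Suc i) = q ! i"
      then have "e = edg (q ! Suc i)" using i unfolding edg_def by simp
      moreover have "q ! Suc i \<noteq> a" using notop inq c by simp
      ultimately show ?thesis using inq by blast
    next
      assume c: "q ! i \<noteq> r \<and> par (q ! i) = q ! Suc i"
      then have "e = edg (q ! i)" using i unfolding edg_def by (simp add: insert_commute)
      moreover have "q ! i \<noteq> a" using notop inq c by simp
      ultimately show ?thesis using inq by blast
    qed
  qed
next
  show "edg ` (set q - {a}) \<subseteq> path_edges q"
  proof
    fix e assume "e \<in> edg ` (set q - {a})"
    then obtain w where w: "e = edg w" "w \<in> set q" "w \<noteq> a" by blast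
    have wV: "w \<in> V" using w assms(2) by blast
    have aw: "a \<in> anc E r w" using assms(4) w by blast
    have wr: "w \<noteq> r" using aw anc_r w(3) by blast
    have "a \<in> anc E r (par w)" using anc_par[OF wV wr aw] w(3) by blast
    then have pq: "par w \<in> set q"
      using convex_path[of q w a "par w"] assms w rp_par[OF wV wr] unfolding vpath_iff by blast
    obtain j where j: "j < length q" "q ! j = w" using w(2) by (auto simp: in_set_conv_nth)
    obtain i where i: "i < length q" "q ! i = par w" using pq by (auto simp: in_set_conv_nth)
    have ij: "i \<noteq> j" using i j rp_par[OF wV wr] by auto
    have eE: "{par w, w} \<in> E" using rp_par[OF wV wr] by blast
    show "e \<in> path_edges q"
    proof (cases "i < j")
      case True
      then have "j = Suc i" using adj_in_path[OF assms(1) True j(1)] eE i j by simp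
      then have "{par w, w} = {q ! i, q ! Suc i}" "Suc i < length q" using i j by auto
      then show ?thesis unfolding path_edges_def w(1) edg_def by blast
    next
      case False
      then have "j < i" using ij by simp
      then have "i = Suc j" using adj_in_path[OF assms(1) _ i(1)] eE i j by (simp add: insert_commute)
      then have "{par w, w} = {q ! j, q ! Suc j}" "Suc j < length q" using i j by (auto simp: insert_commute)
      then show ?thesis unfolding path_edges_def w(1) edg_def by blast
    qed
  qed
qed

lemma tpath_rev: assumes "x \<in> V" "y \<in> V" shows "tpath E y x = rev (tpath E x y)"
proof -
  have "is_vpath E (rev (tpath E x y))" using tpath_props[OF assms] vpath_rev by blast
  moreover have "hd (rev (tpath E x y)) = y" "last (rev (tpath E x y)) = x"
    using tpath_props[OF assms] by (auto simp: hd_rev last_rev)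
  ultimately show ?thesis using tpath_eq' by blast
qed

definition lnk where "lnk l \<longleftrightarrow> (\<exists>x y. l = {x, y} \<and> x \<in> V \<and> y \<in> V)"

lemma Vl_eq: assumes "x \<in> V" "y \<in> V" shows "Vl E {x, y} = set (tpath E x y)"
proof -
  have "{set (tpath E x' y') | x' y'. {x, y} = {x', y'}} = {set (tpath E x y)}"
  proof (rule set_eqI, rule iffI)
    fix S assume "S \<in> {set (tpath E x' y') | x' y'. {x, y} = {x', y'}}"
    then obtain x' y' where xy: "{x, y} = {x', y'}" "S = set (tpath E x' y')" by blast
    from xy(1) have "(x = x' \<and> y = y') \<or> (x = y' \<and> y = x')" by (simp add: doubleton_eq_iff)
    then show "S \<in> {set (tpath E x y)}"
    proof
      assume "x = y' \<and> y = x'"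
      then have "S = set (tpath E y x)" using xy by simp
      then show ?thesis using tpath_rev[OF assms] by simp
    qed (use xy in simp)
  next
    fix S assume "S \<in> {set (tpath E x y)}"
    then show "S \<in> {set (tpath E x' y') | x' y'. {x, y} = {x', y'}}" by blast
  qed
  then show ?thesis unfolding Vl_def by simp
qed

lemma link_top: assumes "x \<in> V" "y \<in> V"
  shows "\<exists>a\<in>set (tpath E x y). \<forall>w\<in>set (tpath E x y). a \<in> anc E r w"
  using top_exists[of "tpath E x y"] tpath_props[OF assms] tpath_V[OF assms] unfolding vpath_iff by blast

lemma apex_eq: assumes "a \<in> Vl E l" "\<forall>w\<in>Vl E l. a \<in> anc E r w" "Vl E l \<subseteq> V"
  shows "apex E r l = a"
  unfolding apex_def
proof (rule the_equality)
  show "a \<in> Vl E l \<and> (\<forall>y\<in>Vl E l. depth E r a \<le> depth E r y)" using assms anc_depth by blast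
next
  fix x assume x: "x \<in> Vl E l \<and> (\<forall>y\<in>Vl E l. depth E r x \<le> depth E r y)"
  then have "a \<in> anc E r x" "depth E r x \<le> depth E r a" using assms by auto
  then show "x = a" using anc_eqd anc_depth assms x by (metis le_antisym subsetD)
qed

lemma lnk_facts: assumes "lnk l"
  shows "Vl E l \<subseteq> V" "apex E r l \<in> Vl E l" "\<And>w. w \<in> Vl E l \<Longrightarrow> apex E r l \<in> anc E r w"
   "\<And>z w. z \<in> Vl E l \<Longrightarrow> apex E r l \<in> anc E r w \<Longrightarrow> w \<in> anc E r z \<Longrightarrow> w \<in> Vl E l"
   "Pl E l = edg ` (Vl E l - {apex E r l})"
proof -
  obtain x y where l: "l = {x, y}" "x \<in> V" "y \<in> V" using assms unfolding lnk_def by blast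
  have V: "Vl E l = set (tpath E x y)" using Vl_eq l by simp
  obtain a where a: "a \<in> Vl E l" "\<forall>w\<in>Vl E l. a \<in> anc E r w" using link_top[OF l(2,3)] V by auto
  show VV: "Vl E l \<subseteq> V" using V tpath_V l by simp
  have ap: "apex E r l = a" using apex_eq a VV by blast
  show "apex E r l \<in> Vl E l" "\<And>w. w \<in> Vl E l \<Longrightarrow> apex E r l \<in> anc E r w" using a ap by auto
  have sq: "successively (\<lambda>x y. {x, y} \<in> E) (tpath E x y)" using tpath_props[OF l(2,3)] unfolding vpath_iff by blast
  show "\<And>z w. z \<in> Vl E l \<Longrightarrow> apex E r l \<in> anc E r w \<Longrightarrow> w \<in> anc E r z \<Longrightarrow> w \<in> Vl E l"
  proof -
    fix z w assume zw: "z \<in> Vl E l" "apex E r l \<in> anc E r w" "w \<in> anc E r z"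
    show "w \<in> Vl E l" using convex_path[OF sq, of z a w] tpath_V[OF l(2,3)] V a ap zw by simp
  qed
  have pe: "path_edges (tpath E x y) = edg ` (Vl E l - {a})"
    using path_edges_char[of "tpath E x y" a] tpath_props[OF l(2,3)] tpath_V[OF l(2,3)] V a by simp
  have pe2: "path_edges (tpath E y x) = edg ` (Vl E l - {a})"
    using pe tpath_rev[OF l(2,3)] path_edges_char[of "tpath E y x" a] tpath_props[OF l(3,2)] tpath_V[OF l(3,2)] V a by simp
  have "{path_edges (tpath E x' y') | x' y'. l = {x', y'}} = {edg ` (Vl E l - {a})}"
  proof (rule set_eqI, rule iffI)
    fix S assume "S \<in> {path_edges (tpath E x' y') | x' y'. l = {x', y'}}"
    then obtain x' y' where xy: "{x, y} = {x', y'}" "S = path_edges (tpath E x' y')" using l by blast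
    from xy(1) have "(x = x' \<and> y = y') \<or> (x = y' \<and> y = x')" by (simp add: doubleton_eq_iff)
    then show "S \<in> {edg ` (Vl E l - {a})}" using xy pe pe2 by auto
  next
    fix S assume "S \<in> {edg ` (Vl E l - {a})}"
    then show "S \<in> {path_edges (tpath E x' y') | x' y'. l = {x', y'}}" using pe l by blast
  qed
  then show "Pl E l = edg ` (Vl E l - {apex E r l})" unfolding Pl_def ap by simp
qed

lemma edg_inj: assumes "w \<in> V" "w' \<in> V" "w \<noteq> r" "w' \<noteq> r" "edg w = edg w'" shows "w = w'"
proof (rule ccontr)
  assume ne: "w \<noteq> w'"
  from assms(5) have "(par w = par w' \<and> w = w') \<or> (par w = w' \<and> w = par w')"
    unfolding edg_def by (simp add: doubleton_eq_iff)
  then have "par w = w'" "w = par w'" using ne by auto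
  then show False using rp_par(2)[OF assms(1,3)] rp_par(2)[OF assms(2,4)] depth_ge2[OF assms(1,3)] by simp
qed

lemma edg_E: "w \<in> V \<Longrightarrow> w \<noteq> r \<Longrightarrow> edg w \<in> E"
  unfolding edg_def using rp_par by blast

lemma edg_mem: assumes "w \<in> V - {r}" "B \<subseteq> V - {r}" shows "edg w \<in> edg ` B \<longleftrightarrow> w \<in> B"
proof
  assume "edg w \<in> edg ` B"
  then obtain w' where "w' \<in> B" "edg w = edg w'" by blast
  then show "w \<in> B" using edg_inj assms by blast
qed auto

lemma par_nth: assumes "b \<in> V" "Suc j < depth E r b" shows "par (rp b ! Suc j) = rp b ! j"
proof -
  have d: "depth E r (rp b ! Suc j) = Suc (Suc j)" using depth_nth assms by blast
  have "rp (rp b ! Suc j) = take (Suc (Suc j)) (rp b)" using rp_take assms by blast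
  then show ?thesis unfolding par_def d by simp
qed

lemma up_path: assumes "b \<in> V" "t \<in> anc E r b"
  shows "tpath E t b = drop (depth E r t - 1) (rp b)"
    "Vl E {t, b} = {w. t \<in> anc E r w \<and> w \<in> anc E r b}"
    "apex E r {t, b} = t"
proof -
  have tV: "t \<in> V" using anc_V assms by blast
  have dt: "depth E r t \<ge> 1" "depth E r t \<le> depth E r b" using depth_pos[OF tV] anc_depth assms by auto
  have rt: "rp t = take (depth E r t) (rp b)" using anc_take assms by blast
  have tn: "rp b ! (depth E r t - 1) = t"
  proof -
    have "last (rp t) = t" using rp_props tV by blast
    moreover have "Suc (depth E r t - 1) = depth E r t" using dt by simp
    ultimately show ?thesis using rt dt last_take_Suc[of "depth E r t - 1" "rp b"] unfolding depth_def by simp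
  qed
  define p where "p = drop (depth E r t - 1) (rp b)"
  have "is_vpath E p" unfolding p_def using vpath_drop rp_props[OF assms(1)] dt unfolding depth_def by simp
  moreover have "hd p = t" unfolding p_def using tn dt unfolding depth_def by (simp add: hd_drop_conv_nth)
  moreover have "last p = b" unfolding p_def using rp_props[OF assms(1)] dt unfolding depth_def by simp
  ultimately have "tpath E t b = p" using tpath_eq' by blast
  then show tp: "tpath E t b = drop (depth E r t - 1) (rp b)" using p_def by simp
  have Vl: "Vl E {t, b} = set p" using Vl_eq tV assms tp p_def by simp
  have top: "\<forall>w\<in>set p. t \<in> anc E r w \<and> w \<in> anc E r b"
  proof
    fix w assume "w \<in> set p"
    then obtain i where i: "i < length p" "p ! i = w" by (auto simp: in_set_conv_nth)
    let ?k = "depth E r t - 1 + i"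
    have k: "?k < depth E r b" "rp b ! ?k = w" using i unfolding p_def depth_def by auto
    have "rp w = take (Suc ?k) (rp b)" using rp_take[OF assms(1) k(1)] k(2) by simp
    moreover have "t \<in> set (take (Suc ?k) (rp b))"
    proof -
      have l: "depth E r t - 1 < length (take (Suc ?k) (rp b))" using k(1) unfolding depth_def by simp
      have "take (Suc ?k) (rp b) ! (depth E r t - 1) = t" using tn by simp
      then show ?thesis using nth_mem[OF l] by simp
    qed
    moreover have "w \<in> set (rp b)" using k nth_mem[of ?k "rp b"] unfolding depth_def by simp
    ultimately show "t \<in> anc E r w \<and> w \<in> anc E r b" unfolding anc_def by simp
  qed
  have tin: "t \<in> set p" using \<open>hd p = t\<close> \<open>is_vpath E p\<close> unfolding is_vpath_def by (metis hd_in_set)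
  have pV: "set p \<subseteq> V" using top anc_V assms by blast
  show ap: "apex E r {t, b} = t" using apex_eq[of t "{t, b}"] Vl top tin pV by blast
  have lk: "lnk {t, b}" unfolding lnk_def using tV assms by blast
  show "Vl E {t, b} = {w. t \<in> anc E r w \<and> w \<in> anc E r b}"
  proof
    show "Vl E {t, b} \<subseteq> {w. t \<in> anc E r w \<and> w \<in> anc E r b}" using Vl top by blast
    show "{w. t \<in> anc E r w \<and> w \<in> anc E r b} \<subseteq> Vl E {t, b}"
    proof
      fix w assume "w \<in> {w. t \<in> anc E r w \<and> w \<in> anc E r b}"
      moreover have "b \<in> Vl E {t, b}" using Vl \<open>last p = b\<close> \<open>is_vpath E p\<close> unfolding is_vpath_def by (metis last_in_set)
      ultimately show "w \<in> Vl E {t, b}" using lnk_facts(4)[OF lk, of b w] ap by simp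
    qed
  qed
qed

lemma up_top_bot: assumes "b \<in> V" "t \<in> anc E r b" "t \<noteq> b"
  shows "up_top E r {t, b} = t" "up_bot E r {t, b} = b"
proof -
  have tV: "t \<in> V" using anc_V assms by blast
  have uniq: "{t, b} = {t', b'} \<Longrightarrow> t' \<noteq> b' \<Longrightarrow> t' \<in> anc E r b' \<Longrightarrow> t' = t \<and> b' = b" for t' b'
  proof -
    assume h: "{t, b} = {t', b'}" "t' \<noteq> b'" "t' \<in> anc E r b'"
    then have "(t = t' \<and> b = b') \<or> (t = b' \<and> b = t')" by (simp add: doubleton_eq_iff)
    then show "t' = t \<and> b' = b"
    proof
      assume "t = b' \<and> b = t'"
      then have "b \<in> anc E r t" using h by simp
      then have "b = t" using anc_antisym tV assms(2) by blast
      then show ?thesis using assms(3) by simp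
    qed auto
  qed
  show "up_top E r {t, b} = t" unfolding up_top_def
    by (rule the_equality) (use assms uniq in blast)+
  show "up_bot E r {t, b} = b" unfolding up_bot_def
    by (rule the_equality) (use assms uniq in blast)+
qed

end



locale wtap = wtree +
  fixes L :: "'a set set" and F :: "'a set set" and U :: "'a set set" and Fsel :: "'a set \<Rightarrow> 'a set set"
  assumes links: "L \<subseteq> {{x, y} | x y. x \<in> V \<and> y \<in> V \<and> x \<noteq> y}"
    and solF: "F \<subseteq> L" and solE: "\<Union>(Pl E ` F) = E"
    and Uup: "U \<subseteq> L_up E r L"
    and Udisj: "\<forall>u\<in>U. \<forall>u'\<in>U. u \<noteq> u' \<longrightarrow> Pl E u \<inter> Pl E u' = {}"
    and FselV: "\<forall>u\<in>U. valid_Fu V E r F u (Fsel u)"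
begin

definition Xs where "Xs l = Vl E l - {apex E r l}"
definition Xul where "Xul u S l = Xs u - \<Union>(Xs ` (S - {l}))"
definition prec' where "prec' u S l1 l2 \<longleftrightarrow> (\<forall>w1\<in>Xul u S l1. \<forall>w2\<in>Xul u S l2. depth E r w1 < depth E r w2)"
abbreviation tt where "tt u \<equiv> up_top E r u"
abbreviation bb where "bb u \<equiv> up_bot E r u"

lemma L_lnk: "l \<in> L \<Longrightarrow> lnk l"
  using links unfolding lnk_def by blast

lemma Xs_V: assumes "lnk l" shows "Xs l \<subseteq> V - {r}"
proof
  fix w assume w: "w \<in> Xs l"
  then have "w \<in> V" using lnk_facts(1)[OF assms] unfolding Xs_def by blast
  moreover have "w \<noteq> r"
  proof
    assume "w = r"
    then have "apex E r l = r" using lnk_facts(3)[OF assms] w anc_r unfolding Xs_def by blast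
    then show False using w \<open>w = r\<close> unfolding Xs_def by simp
  qed
  ultimately show "w \<in> V - {r}" by blast
qed

lemma Pl_Xs: "lnk l \<Longrightarrow> Pl E l = edg ` Xs l"
  using lnk_facts(5) unfolding Xs_def by blast

lemma Xs_anc: "lnk l \<Longrightarrow> w \<in> Xs l \<Longrightarrow> apex E r l \<in> anc E r w \<and> apex E r l \<noteq> w"
  using lnk_facts(3) unfolding Xs_def by blast

lemma up_facts: assumes "u \<in> U"
  shows "u = {tt u, bb u}" "bb u \<in> V" "tt u \<in> anc E r (bb u)" "tt u \<noteq> bb u" "u \<in> L" "lnk u"
    "Xs u = {w. tt u \<in> anc E r w \<and> w \<in> anc E r (bb u) \<and> w \<noteq> tt u}"
    "tpath E (tt u) (bb u) = drop (depth E r (tt u) - 1) (rp (bb u))"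
    "Vl E u = {w. tt u \<in> anc E r w \<and> w \<in> anc E r (bb u)}"
proof -
  have uL: "u \<in> L" and up: "is_up_link E r u" using Uup assms unfolding L_up_def by auto
  obtain t b where tb: "u = {t, b}" "t \<noteq> b" "t \<in> anc E r b" using up unfolding is_up_link_def by blast
  obtain x y where xy: "u = {x, y}" "x \<in> V" "y \<in> V" using uL links by blast
  have bV: "b \<in> V" using tb xy by (auto simp: doubleton_eq_iff)
  have ut: "tt u = t" "bb u = b" using up_top_bot[OF bV tb(3) tb(2)] tb by auto
  show "u = {tt u, bb u}" "bb u \<in> V" "tt u \<in> anc E r (bb u)" "tt u \<noteq> bb u" "u \<in> L" "lnk u"
    using ut tb bV uL L_lnk by auto
  show "tpath E (tt u) (bb u) = drop (depth E r (tt u) - 1) (rp (bb u))"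
    "Vl E u = {w. tt u \<in> anc E r w \<and> w \<in> anc E r (bb u)}"
    using up_path[OF bV tb(3)] ut tb by auto
  then show "Xs u = {w. tt u \<in> anc E r w \<and> w \<in> anc E r (bb u) \<and> w \<noteq> tt u}"
    unfolding Xs_def using up_path(3)[OF bV tb(3)] ut tb by auto
qed

lemma Fsel_facts: assumes "u \<in> U"
  shows "Fsel u \<subseteq> Bset V E r F (v_of V E r F u)" "Fsel u \<subseteq> F" "Fsel u \<subseteq> L"
    "Pl E u \<subseteq> \<Union>(Pl E ` Fsel u)" "\<And>S'. S' \<subset> Fsel u \<Longrightarrow> \<not> Pl E u \<subseteq> \<Union>(Pl E ` S')"
  using FselV assms solF unfolding valid_Fu_def Bset_def by blast+

lemma Un_edg: assumes "S \<subseteq> L" shows "\<Union>(Pl E ` S) = edg ` \<Union>(Xs ` S)"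
proof -
  have "\<And>l. l \<in> S \<Longrightarrow> Pl E l = edg ` Xs l" using Pl_Xs L_lnk assms by blast
  then have "\<Union>(Pl E ` S) = (\<Union>l\<in>S. edg ` Xs l)" by (metis (no_types, lifting) SUP_cong)
  then show ?thesis by (simp add: image_UN)
qed

lemma UXs_V: assumes "S \<subseteq> L" shows "\<Union>(Xs ` S) \<subseteq> V - {r}"
proof
  fix w assume "w \<in> \<Union>(Xs ` S)"
  then obtain l where "l \<in> S" "w \<in> Xs l" by blast
  then show "w \<in> V - {r}" using Xs_V[OF L_lnk] assms by blast
qed

lemma cover_iff: assumes "u \<in> L" "S \<subseteq> L"
  shows "Pl E u \<subseteq> \<Union>(Pl E ` S) \<longleftrightarrow> Xs u \<subseteq> \<Union>(Xs ` S)"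
proof -
  have A: "Xs u \<subseteq> V - {r}" using Xs_V[OF L_lnk[OF assms(1)]] .
  have B: "\<Union>(Xs ` S) \<subseteq> V - {r}" using UXs_V assms by blast
  have pu: "Pl E u = edg ` Xs u" using Pl_Xs[OF L_lnk[OF assms(1)]] .
  have "Pl E u \<subseteq> \<Union>(Pl E ` S) \<longleftrightarrow> edg ` Xs u \<subseteq> edg ` \<Union>(Xs ` S)"
    unfolding pu Un_edg[OF assms(2)] ..
  also have "\<dots> \<longleftrightarrow> Xs u \<subseteq> \<Union>(Xs ` S)"
  proof
    assume h: "edg ` Xs u \<subseteq> edg ` \<Union>(Xs ` S)"
    show "Xs u \<subseteq> \<Union>(Xs ` S)"
    proof
      fix w assume w: "w \<in> Xs u"
      then have "edg w \<in> edg ` \<Union>(Xs ` S)" using h by blast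
      then show "w \<in> \<Union>(Xs ` S)" using edg_mem[of w "\<Union>(Xs ` S)"] A B w by blast
    qed
  qed blast
  finally show ?thesis .
qed

lemma inj_edg: "inj_on edg (V - {r})"
proof (rule inj_onI)
  fix x y assume "x \<in> V - {r}" "y \<in> V - {r}" "edg x = edg y"
  then show "x = y" using edg_inj[of x y] by simp
qed

lemma Pul_eq: assumes "u \<in> L" "S \<subseteq> L" shows "Pul E u S l = edg ` Xul u S l"
proof -
  have A: "Xs u \<subseteq> V - {r}" using Xs_V[OF L_lnk[OF assms(1)]] .
  have B: "\<Union>(Xs ` (S - {l})) \<subseteq> V - {r}" using UXs_V assms by blast
  have pu: "Pl E u = edg ` Xs u" using Pl_Xs[OF L_lnk[OF assms(1)]] .
  have "S - {l} \<subseteq> L" using assms by blast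
  then have "Pul E u S l = edg ` Xs u - edg ` \<Union>(Xs ` (S - {l}))"
    unfolding Pul_def pu using Un_edg by simp
  also have "\<dots> = edg ` (Xs u - \<Union>(Xs ` (S - {l})))"
  proof -
    have "Xs u - \<Union>(Xs ` (S - {l})) \<subseteq> V - {r}" using A by blast
    from inj_on_image_set_diff[OF inj_edg this B] show ?thesis by simp
  qed
  finally show ?thesis unfolding Xul_def .
qed

lemma Xul_ne: assumes "u \<in> U" "l \<in> Fsel u" shows "Xul u (Fsel u) l \<noteq> {}"
proof
  assume e: "Xul u (Fsel u) l = {}"
  have "Pul E u (Fsel u) l = {}" using Pul_eq e up_facts(5)[OF assms(1)] Fsel_facts(3)[OF assms(1)] by simp
  then have "Pl E u \<subseteq> \<Union>(Pl E ` (Fsel u - {l}))" unfolding Pul_def by blast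
  moreover have "Fsel u - {l} \<subset> Fsel u" using assms(2) by blast
  ultimately show False using Fsel_facts(5)[OF assms(1)] by blast
qed

lemma Xs_cover: assumes "u \<in> U" shows "Xs u \<subseteq> \<Union>(Xs ` Fsel u)"
  using cover_iff Fsel_facts[OF assms] up_facts(5)[OF assms] by blast

lemma Xul_sub: assumes "u \<in> U" "l \<in> Fsel u" shows "Xul u (Fsel u) l \<subseteq> Xs l" "Xul u (Fsel u) l \<subseteq> Xs u"
  using Xs_cover[OF assms(1)] assms unfolding Xul_def by blast+

lemma Xul_notin: "l' \<in> S \<Longrightarrow> l' \<noteq> l \<Longrightarrow> w \<in> Xul u S l \<Longrightarrow> w \<notin> Xs l'"
  unfolding Xul_def by blast

lemma Xs_u_V: "u \<in> U \<Longrightarrow> w \<in> Xs u \<Longrightarrow> w \<in> V"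
  using Xs_V up_facts by blast

lemma ch: assumes "u \<in> U" "w1 \<in> Xs u" "w2 \<in> Xs u" "depth E r w1 \<le> depth E r w2"
  shows "w1 \<in> anc E r w2"
proof -
  have "w1 \<in> anc E r (bb u)" "w2 \<in> anc E r (bb u)" using up_facts(7)[OF assms(1)] assms by auto
  then have "w1 \<in> anc E r w2 \<or> w2 \<in> anc E r w1" using anc_lin up_facts(2)[OF assms(1)] by blast
  then show ?thesis
  proof
    assume h: "w2 \<in> anc E r w1"
    have w1V: "w1 \<in> V" using Xs_u_V assms by blast
    have "depth E r w2 = depth E r w1" using anc_depth[OF w1V h] assms(4) by simp
    then have "w2 = w1" using anc_eqd[OF w1V h] by simp
    then show ?thesis using anc_refl w1V by simp
  qed
qed

lemma interval: assumes "lnk l" "w1 \<in> Xs l" "w3 \<in> Xs l" "w1 \<in> anc E r w2" "w2 \<in> anc E r w3"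
  shows "w2 \<in> Xs l"
proof -
  have w3V: "w3 \<in> V" using Xs_V assms by blast
  have w2V: "w2 \<in> V" using anc_V[OF w3V] assms(5) by blast
  have a1: "apex E r l \<in> anc E r w1" "apex E r l \<noteq> w1" using Xs_anc assms by auto
  have a2: "apex E r l \<in> anc E r w2" using anc_trans[OF w2V assms(4) a1(1)] .
  have "w3 \<in> Vl E l" using assms unfolding Xs_def by blast
  then have "w2 \<in> Vl E l" using lnk_facts(4)[OF assms(1)] a2 assms(5) by blast
  moreover have "w2 \<noteq> apex E r l"
  proof
    assume "w2 = apex E r l"
    then have "w1 = apex E r l" using anc_antisym[OF w2V assms(4)] a1(1) by simp
    then show False using a1 by simp
  qed
  ultimately show ?thesis unfolding Xs_def by blast
qed

lemma total: assumes "u \<in> U" "l1 \<in> Fsel u" "l2 \<in> Fsel u" "l1 \<noteq> l2"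
  shows "prec' u (Fsel u) l1 l2 \<or> prec' u (Fsel u) l2 l1"
proof (rule ccontr)
  let ?S = "Fsel u"
  assume "\<not> ?thesis"
  then obtain w1 w2 w1' w2' where w: "w1 \<in> Xul u ?S l1" "w2 \<in> Xul u ?S l2" "depth E r w2 \<le> depth E r w1"
     "w1' \<in> Xul u ?S l1" "w2' \<in> Xul u ?S l2" "depth E r w1' \<le> depth E r w2'"
    unfolding prec'_def by (meson not_less)
  have lk: "lnk l1" "lnk l2" using Fsel_facts(3)[OF assms(1)] assms L_lnk by auto
  have X1: "w1 \<in> Xs l1" "w1' \<in> Xs l1" using Xul_sub[OF assms(1,2)] w by auto
  have X2: "w2 \<in> Xs l2" "w2' \<in> Xs l2" using Xul_sub[OF assms(1,3)] w by auto
  have N1: "w1 \<notin> Xs l2" "w1' \<notin> Xs l2" using Xul_notin[OF assms(3)] assms(4) w by auto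
  have N2: "w2 \<notin> Xs l1" "w2' \<notin> Xs l1" using Xul_notin[OF assms(2)] assms(4) w by auto
  have U: "w1 \<in> Xs u" "w2 \<in> Xs u" "w1' \<in> Xs u" "w2' \<in> Xs u"
    using Xul_sub[OF assms(1,2)] Xul_sub[OF assms(1,3)] w by auto
  have a21: "w2 \<in> anc E r w1" using ch[OF assms(1) U(2) U(1) w(3)] .
  have a12: "w1' \<in> anc E r w2'" using ch[OF assms(1) U(3) U(4) w(6)] .
  show False
  proof (cases "depth E r w2 \<le> depth E r w1'")
    case True
    then have "w2 \<in> anc E r w1'" using ch[OF assms(1) U(2) U(3)] by blast
    then have "w1' \<in> Xs l2" using interval[OF lk(2) X2(1) X2(2) _ a12] by blast
    then show False using N1 by blast
  next
    case False
    then have "w1' \<in> anc E r w2" using ch[OF assms(1) U(3) U(2)] by simp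
    then have "w2 \<in> Xs l1" using interval[OF lk(1) X1(2) X1(1) _ a21] by blast
    then show False using N2 by blast
  qed
qed

end



context wtap begin

lemma prec_iff: assumes "u \<in> U" "S \<subseteq> L"
  shows "prec_u E r u S l1 l2 \<longleftrightarrow> prec' u S l1 l2"
proof -
  define t where "t = tt u"
  define b where "b = bb u"
  define k where "k = depth E r t - 1"
  define p where "p = tpath E t b"
  have bV: "b \<in> V" and tb: "t \<in> anc E r b" using up_facts[OF assms(1)] t_def b_def by auto
  have tV: "t \<in> V" using anc_V[OF bV] tb by blast
  have pd: "p = drop k (rp b)" using up_facts(8)[OF assms(1)] unfolding p_def k_def t_def b_def .
  have dt: "depth E r t \<ge> 1" "depth E r t \<le> depth E r b" using depth_pos[OF tV] anc_depth[OF bV tb] by auto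
  have len: "length p = depth E r b - k" unfolding pd depth_def by simp
  have kt: "Suc k = depth E r t" using dt unfolding k_def by simp
  have pa: "{p ! i, p ! Suc i} = edg (p ! Suc i) \<and> p ! Suc i \<in> V - {r} \<and> depth E r (p ! Suc i) = depth E r t + Suc i"
    if i: "Suc i < length p" for i
  proof -
    have lt: "Suc (k + i) < depth E r b" using i len dt kt by simp
    have n1: "p ! i = rp b ! (k + i)" "p ! Suc i = rp b ! Suc (k + i)" unfolding pd using lt unfolding depth_def by auto
    have pn: "par (rp b ! Suc (k + i)) = rp b ! (k + i)" using par_nth[OF bV lt] .
    have dn: "depth E r (rp b ! Suc (k + i)) = Suc (Suc (k + i))" using depth_nth[OF bV lt] .
    have inV: "rp b ! Suc (k + i) \<in> V" using anc_V[OF bV] nth_mem[of "Suc (k + i)" "rp b"] lt unfolding anc_def depth_def by auto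
    have nr: "rp b ! Suc (k + i) \<noteq> r" using dn depth_r by auto
    show ?thesis using n1 pn dn inV nr kt unfolding edg_def by auto
  qed
  have Vp: "Vl E u = set p" using Vl_eq[OF tV bV] up_facts(1)[OF assms(1)] unfolding p_def t_def b_def by simp
  have p0: "p ! 0 = t" using tpath_props[OF tV bV] unfolding p_def is_vpath_def by (simp add: hd_conv_nth)
  have pb: "\<exists>i. Suc i < length p \<and> p ! Suc i = w" if w: "w \<in> Xs u" for w
  proof -
    have "w \<in> set p" "w \<noteq> t" using w Vp up_facts(7)[OF assms(1)] unfolding Xs_def t_def by auto
    then obtain j where j: "j < length p" "p ! j = w" by (auto simp: in_set_conv_nth)
    then have "j \<noteq> 0" using p0 \<open>w \<noteq> t\<close> by (metis)
    then obtain i where "j = Suc i" using not0_implies_Suc by blast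
    then show ?thesis using j by blast
  qed
  have uL: "u \<in> L" using up_facts(5)[OF assms(1)] .
  have Pul: "\<And>l. Pul E u S l = edg ` Xul u S l" using Pul_eq[OF uL assms(2)] .
  have XulV: "\<And>l. Xul u S l \<subseteq> V - {r}" using Xs_V[OF L_lnk[OF uL]] unfolding Xul_def by blast
  have XulU: "\<And>l. Xul u S l \<subseteq> Xs u" unfolding Xul_def by blast
  show ?thesis
  proof
    assume H: "prec_u E r u S l1 l2"
    show "prec' u S l1 l2" unfolding prec'_def
    proof (intro ballI)
      fix w1 w2 assume w1: "w1 \<in> Xul u S l1" and w2: "w2 \<in> Xul u S l2"
      obtain i where i: "Suc i < length p" "p ! Suc i = w1" using pb XulU w1 by blast
      obtain j where j: "Suc j < length p" "p ! Suc j = w2" using pb XulU w2 by blast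
      have e1: "edg w1 \<in> Pul E u S l1" "edg w2 \<in> Pul E u S l2" using Pul w1 w2 by auto
      have "edg w1 = {p ! i, p ! Suc i}" "edg w2 = {p ! j, p ! Suc j}" using pa i j by auto
      then have "i < j" using H e1 i(1) j(1) unfolding prec_u_def Let_def p_def t_def b_def by blast
      then show "depth E r w1 < depth E r w2" using pa i j by auto
    qed
  next
    assume H: "prec' u S l1 l2"
    show "prec_u E r u S l1 l2" unfolding prec_u_def Let_def p_def[symmetric, unfolded t_def b_def]
    proof (intro ballI allI impI)
      fix e1 e2 i j assume e: "e1 \<in> Pul E u S l1" "e2 \<in> Pul E u S l2" "Suc i < length p" "Suc j < length p"
        "e1 = {p ! i, p ! Suc i}" "e2 = {p ! j, p ! Suc j}"
      obtain w1 where w1: "w1 \<in> Xul u S l1" "e1 = edg w1" using e Pul by blast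
      obtain w2 where w2: "w2 \<in> Xul u S l2" "e2 = edg w2" using e Pul by blast
      have "w1 = p ! Suc i" using edg_inj[of w1 "p ! Suc i"] pa[OF e(3)] XulV w1 e(5) by auto
      moreover have "w2 = p ! Suc j" using edg_inj[of w2 "p ! Suc j"] pa[OF e(4)] XulV w2 e(6) by auto
      moreover have "depth E r w1 < depth E r w2" using H w1 w2 unfolding prec'_def by blast
      ultimately show "i < j" using pa e(3,4) by auto
    qed
  qed
qed

lemma Au_iff: assumes "u \<in> U"
  shows "(m, c) \<in> A_u E r u (Fsel u) \<longleftrightarrow> m \<in> Fsel u \<and> c \<in> Fsel u \<and> m \<noteq> c \<and> prec' u (Fsel u) m c \<and>
     \<not> (\<exists>l\<in>Fsel u. l \<noteq> m \<and> l \<noteq> c \<and> prec' u (Fsel u) m l \<and> prec' u (Fsel u) l c)"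
  unfolding A_u_def using prec_iff[OF assms Fsel_facts(3)[OF assms]] by simp

lemma A1: assumes uU: "u \<in> U" and mc: "(m, c) \<in> A_u E r u (Fsel u)"
  shows "apex E r c \<in> Xs u" "apex E r c \<in> Xs m" "\<forall>g\<in>Xul u (Fsel u) m. g \<in> anc E r (apex E r c)"
    "m \<in> Fsel u" "c \<in> Fsel u" "m \<in> F" "c \<in> F"
proof -
  let ?S = "Fsel u"
  let ?s = "apex E r c"
  have mS: "m \<in> ?S" and cS: "c \<in> ?S" and mnc: "m \<noteq> c" and pmc: "prec' u ?S m c"
    and nb: "\<not> (\<exists>l\<in>?S. l \<noteq> m \<and> l \<noteq> c \<and> prec' u ?S m l \<and> prec' u ?S l c)"
    using Au_iff[OF uU] mc by auto
  show "m \<in> ?S" "c \<in> ?S" using mS cS by auto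
  show "m \<in> F" "c \<in> F" using mS cS Fsel_facts(2)[OF uU] by auto
  have lkm: "lnk m" and lkc: "lnk c" using mS cS Fsel_facts(3)[OF uU] L_lnk by auto
  have bV: "bb u \<in> V" using up_facts(2)[OF uU] .
  obtain e where e: "e \<in> Xul u ?S c" using Xul_ne[OF uU cS] by blast
  have eU: "e \<in> Xs u" and ec: "e \<in> Xs c" using Xul_sub[OF uU cS] e by auto
  have eV: "e \<in> V" using Xs_u_V[OF uU eU] .
  have se: "?s \<in> anc E r e" using Xs_anc[OF lkc ec] by blast
  have LX: "\<forall>g\<in>Xul u ?S m. g \<in> anc E r ?s"
  proof
    fix g assume g: "g \<in> Xul u ?S m"
    have gU: "g \<in> Xs u" using Xul_sub[OF uU mS] g by blast
    have gV: "g \<in> V" using Xs_u_V[OF uU gU] .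
    have "depth E r g < depth E r e" using pmc g e unfolding prec'_def by blast
    then have ge: "g \<in> anc E r e" using ch[OF uU gU eU] by simp
    from anc_lin[OF eV se ge] show "g \<in> anc E r ?s"
    proof
      assume sg: "?s \<in> anc E r g"
      show ?thesis
      proof (cases "g = ?s")
        case True then show ?thesis using anc_refl gV by simp
      next
        case False
        have "e \<in> Vl E c" using ec unfolding Xs_def by blast
        then have "g \<in> Vl E c" using lnk_facts(4)[OF lkc] sg ge by blast
        then have "g \<in> Xs c" using False unfolding Xs_def by blast
        then show ?thesis using Xul_notin[OF cS mnc[symmetric] g] by blast
      qed
    qed
  qed
  then show "\<forall>g\<in>Xul u ?S m. g \<in> anc E r ?s" .
  have sU: "?s \<in> Xs u"
  proof -
    obtain g where g: "g \<in> Xul u ?S m" using Xul_ne[OF uU mS] by blast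
    have gU: "g \<in> Xs u" using Xul_sub[OF uU mS] g by blast
    have gV: "g \<in> V" using Xs_u_V[OF uU gU] .
    have gs: "g \<in> anc E r ?s" using LX g by blast
    have g3: "tt u \<in> anc E r g" "g \<noteq> tt u" using gU up_facts(7)[OF uU] by auto
    have "e \<in> anc E r (bb u)" using eU up_facts(7)[OF uU] by auto
    then have sb: "?s \<in> anc E r (bb u)" using anc_trans[OF bV _ se] by blast
    have sV: "?s \<in> V" using anc_V[OF bV] sb by blast
    have ts: "tt u \<in> anc E r ?s" using anc_trans[OF sV gs g3(1)] .
    have "?s \<noteq> tt u"
    proof
      assume "?s = tt u"
      then have "g = tt u" using anc_antisym[OF gV g3(1)] gs by simp
      then show False using g3 by simp
    qed
    then show ?thesis using sb ts up_facts(7)[OF uU] by blast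
  qed
  then show "?s \<in> Xs u" .
  show "?s \<in> Xs m"
  proof (rule ccontr)
    assume nsm: "?s \<notin> Xs m"
    obtain l where lS: "l \<in> ?S" and sl: "?s \<in> Xs l" using Xs_cover[OF uU] sU by blast
    have lc: "l \<noteq> c" using sl unfolding Xs_def by blast
    have lm: "l \<noteq> m" using nsm sl by blast
    have lkl: "lnk l" using lS Fsel_facts(3)[OF uU] L_lnk by auto
    have pml: "prec' u ?S m l"
    proof (rule ccontr)
      assume "\<not> prec' u ?S m l"
      then have plm: "prec' u ?S l m" using total[OF uU mS lS lm[symmetric]] by blast
      obtain w where w: "w \<in> Xul u ?S l" using Xul_ne[OF uU lS] by blast
      obtain g where g: "g \<in> Xul u ?S m" using Xul_ne[OF uU mS] by blast
      have "depth E r w < depth E r g" using plm w g unfolding prec'_def by blast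
      moreover have wU: "w \<in> Xs u" and wl: "w \<in> Xs l" using Xul_sub[OF uU lS] w by auto
      moreover have gU: "g \<in> Xs u" using Xul_sub[OF uU mS] g by auto
      ultimately have wg: "w \<in> anc E r g" using ch[OF uU wU gU] by simp
      have gs: "g \<in> anc E r ?s" using LX g by blast
      have "g \<in> Xs l" using interval[OF lkl wl sl wg gs] .
      then show False using Xul_notin[OF lS lm g] by blast
    qed
    have plc: "prec' u ?S l c"
    proof (rule ccontr)
      assume "\<not> prec' u ?S l c"
      then have pcl: "prec' u ?S c l" using total[OF uU lS cS lc] by blast
      obtain w where w: "w \<in> Xul u ?S l" using Xul_ne[OF uU lS] by blast
      have "depth E r e < depth E r w" using pcl w e unfolding prec'_def by blast
      moreover have wU: "w \<in> Xs u" and wl: "w \<in> Xs l" using Xul_sub[OF uU lS] w by auto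
      ultimately have ew: "e \<in> anc E r w" using ch[OF uU eU wU] by simp
      have "e \<in> Xs l" using interval[OF lkl sl wl se ew] .
      then show False using Xul_notin[OF lS lc e] by blast
    qed
    show False using nb lS lm lc pml plc by blast
  qed
qed

lemma OutSame: assumes uU: "u \<in> U" and a1: "(m, c1) \<in> A_u E r u (Fsel u)" and a2: "(m, c2) \<in> A_u E r u (Fsel u)"
  shows "c1 = c2"
proof (rule ccontr)
  assume ne: "c1 \<noteq> c2"
  have h1: "m \<in> Fsel u" "c1 \<in> Fsel u" "m \<noteq> c1" "prec' u (Fsel u) m c1"
    "\<not> (\<exists>l\<in>Fsel u. l \<noteq> m \<and> l \<noteq> c1 \<and> prec' u (Fsel u) m l \<and> prec' u (Fsel u) l c1)"
    using Au_iff[OF uU] a1 by auto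
  have h2: "c2 \<in> Fsel u" "m \<noteq> c2" "prec' u (Fsel u) m c2"
    "\<not> (\<exists>l\<in>Fsel u. l \<noteq> m \<and> l \<noteq> c2 \<and> prec' u (Fsel u) m l \<and> prec' u (Fsel u) l c2)"
    using Au_iff[OF uU] a2 by auto
  from total[OF uU h1(2) h2(1) ne] show False
  proof
    assume "prec' u (Fsel u) c1 c2"
    then show False using h2(4) h1(2,3,4) ne by blast
  next
    assume "prec' u (Fsel u) c2 c1"
    then show False using h1(5) h2(1,2,3) ne by blast
  qed
qed

lemma InSame: assumes uU: "u \<in> U" and a1: "(m1, c) \<in> A_u E r u (Fsel u)" and a2: "(m2, c) \<in> A_u E r u (Fsel u)"
  shows "m1 = m2"
proof (rule ccontr)
  assume ne: "m1 \<noteq> m2"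
  have h1: "m1 \<in> Fsel u" "c \<in> Fsel u" "m1 \<noteq> c" "prec' u (Fsel u) m1 c"
    "\<not> (\<exists>l\<in>Fsel u. l \<noteq> m1 \<and> l \<noteq> c \<and> prec' u (Fsel u) m1 l \<and> prec' u (Fsel u) l c)"
    using Au_iff[OF uU] a1 by auto
  have h2: "m2 \<in> Fsel u" "m2 \<noteq> c" "prec' u (Fsel u) m2 c"
    "\<not> (\<exists>l\<in>Fsel u. l \<noteq> m2 \<and> l \<noteq> c \<and> prec' u (Fsel u) m2 l \<and> prec' u (Fsel u) l c)"
    using Au_iff[OF uU] a2 by auto
  from total[OF uU h1(1) h2(1) ne] show False
  proof
    assume "prec' u (Fsel u) m1 m2"
    then show False using h1(5) h2(1,2,3) ne by blast
  next
    assume "prec' u (Fsel u) m2 m1"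
    then show False using h2(4) h1(1,3,4) ne by blast
  qed
qed

lemma InDeg: assumes uU: "u \<in> U" and uU': "u' \<in> U" and a1: "(m1, c) \<in> A_u E r u (Fsel u)"
  and a2: "(m2, c) \<in> A_u E r u' (Fsel u')"
  shows "u = u'" "m1 = m2"
proof -
  have "apex E r c \<in> Xs u" "apex E r c \<in> Xs u'" using A1(1)[OF uU a1] A1(1)[OF uU' a2] by auto
  then have "edg (apex E r c) \<in> Pl E u \<inter> Pl E u'" using Pl_Xs up_facts(6)[OF uU] up_facts(6)[OF uU'] by auto
  then show uu: "u = u'" using Udisj uU uU' by blast
  show "m1 = m2" using InSame[OF uU a1] a2 uu by simp
qed

end



context wtap begin

abbreviation R where "R \<equiv> dep_arcs E r U Fsel"

lemma R_iff: "(a, b) \<in> R \<longleftrightarrow> (\<exists>u\<in>U. (a, b) \<in> A_u E r u (Fsel u))"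
  unfolding dep_arcs_def by blast

lemma Bset_iff: "l \<in> Bset V E r F v \<longleftrightarrow> l \<in> F \<and> v \<in> anc E r (apex E r l)"
proof -
  have "l \<in> F \<Longrightarrow> apex E r l \<in> V" using lnk_facts(1,2) L_lnk solF by blast
  then show ?thesis unfolding Bset_def desc_def by blast
qed

lemma Bset_L: "Bset V E r F v \<subseteq> L" using solF unfolding Bset_def by blast

lemma vof: assumes uU: "u \<in> U"
  shows "v_of V E r F u \<in> anc E r (tt u)"
    "\<And>v'. v' \<in> anc E r (tt u) \<Longrightarrow> Pl E u \<subseteq> \<Union>(Pl E ` Bset V E r F v') \<Longrightarrow> depth E r v' \<le> depth E r (v_of V E r F u)"
proof -
  let ?t = "tt u"
  let ?cov = "\<lambda>v. Pl E u \<subseteq> \<Union>(Pl E ` Bset V E r F v)"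
  have tV: "?t \<in> V" using up_facts(2,3)[OF uU] anc_V by blast
  define K where "K = {v \<in> anc E r ?t. ?cov v}"
  have finK: "finite K" unfolding K_def anc_def by simp
  have "Bset V E r F r = F"
  proof (rule set_eqI)
    fix l
    show "l \<in> Bset V E r F r \<longleftrightarrow> l \<in> F"
    proof
      assume lF: "l \<in> F"
      then have "lnk l" using solF L_lnk by blast
      then have "apex E r l \<in> V" using lnk_facts(1,2) by blast
      then show "l \<in> Bset V E r F r" using Bset_iff lF r_anc by blast
    qed (use Bset_iff in blast)
  qed
  moreover have "Pl E u \<subseteq> E"
  proof
    fix e assume "e \<in> Pl E u"
    then obtain w where "w \<in> Xs u" "e = edg w" using Pl_Xs[OF up_facts(6)[OF uU]] by blast
    then show "e \<in> E" using Xs_V[OF up_facts(6)[OF uU]] edg_E by blast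
  qed
  ultimately have "?cov r" using solE by simp
  then have rK: "r \<in> K" unfolding K_def using r_anc[OF tV] by blast
  define M where "M = Max (depth E r ` K)"
  have "M \<in> depth E r ` K" unfolding M_def using finK rK by (intro Max_in) auto
  then obtain v0 where v0: "v0 \<in> K" "depth E r v0 = M" by blast
  have v0max: "\<And>v. v \<in> K \<Longrightarrow> depth E r v \<le> depth E r v0" using v0 finK unfolding M_def by simp
  have "v_of V E r F u = v0" unfolding v_of_def
  proof (rule the_equality)
    show "v0 \<in> anc E r ?t \<and> ?cov v0 \<and> (\<forall>v'\<in>anc E r ?t. ?cov v' \<longrightarrow> depth E r v' \<le> depth E r v0)"
      using v0 v0max unfolding K_def by blast
  next
    fix x assume x: "x \<in> anc E r ?t \<and> ?cov x \<and> (\<forall>v'\<in>anc E r ?t. ?cov v' \<longrightarrow> depth E r v' \<le> depth E r x)"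
    then have "depth E r v0 \<le> depth E r x" using v0 unfolding K_def by blast
    moreover have "depth E r x \<le> depth E r v0" using x v0max unfolding K_def by blast
    moreover have "v0 \<in> anc E r ?t" using v0 unfolding K_def by blast
    ultimately have d: "depth E r x = depth E r v0" "v0 \<in> anc E r ?t" by auto
    have xt: "x \<in> anc E r ?t" using x by blast
    have xV: "x \<in> V" "v0 \<in> V" using anc_V[OF tV] xt d by auto
    from anc_lin[OF tV xt d(2)] show "x = v0"
    proof
      assume "x \<in> anc E r v0" then show ?thesis using anc_eqd[OF xV(2)] d by simp
    next
      assume "v0 \<in> anc E r x" then show ?thesis using anc_eqd[OF xV(1), of v0] d by simp
    qed
  qed
  then show "v_of V E r F u \<in> anc E r (tt u)"
    "\<And>v'. v' \<in> anc E r (tt u) \<Longrightarrow> ?cov v' \<Longrightarrow> depth E r v' \<le> depth E r (v_of V E r F u)"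
    using v0 v0max unfolding K_def by auto
qed

lemma chainL: assumes "(c, y) \<in> R\<^sup>*" "c \<in> F"
  shows "y \<in> F \<and> (\<forall>x\<in>Vl E y. apex E r c \<in> anc E r x \<and>
     (\<forall>w. apex E r c \<in> anc E r w \<longrightarrow> w \<in> anc E r x \<longrightarrow> w \<noteq> apex E r c \<longrightarrow> w \<in> \<Union>(Xs ` Bset V E r F (apex E r c))))"
  using assms(1)
proof (induction rule: rtrancl_induct)
  case base
  have lk: "lnk c" using assms(2) solF L_lnk by blast
  have aV: "apex E r c \<in> V" using lnk_facts(1,2)[OF lk] by blast
  have cB: "c \<in> Bset V E r F (apex E r c)" using Bset_iff assms(2) anc_refl[OF aV] by blast
  show ?case
  proof (intro conjI ballI allI impI)
    show "c \<in> F" using assms(2) .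
    fix x assume x: "x \<in> Vl E c"
    show "apex E r c \<in> anc E r x" using lnk_facts(3)[OF lk x] .
    fix w assume w: "apex E r c \<in> anc E r w" "w \<in> anc E r x" "w \<noteq> apex E r c"
    have "w \<in> Xs c" using lnk_facts(4)[OF lk x w(1,2)] w(3) unfolding Xs_def by blast
    then show "w \<in> \<Union>(Xs ` Bset V E r F (apex E r c))" using cB by blast
  qed
next
  case (step y y')
  obtain u where uU: "u \<in> U" and a: "(y, y') \<in> A_u E r u (Fsel u)" using step.hyps(2) R_iff by blast
  have y'F: "y' \<in> F" using A1(7)[OF uU a] .
  have lk: "lnk y'" using y'F solF L_lnk by blast
  let ?a = "apex E r y'"
  let ?ac = "apex E r c"
  have aXy: "?a \<in> Xs y" using A1(2)[OF uU a] .
  then have aVy: "?a \<in> Vl E y" unfolding Xs_def by blast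
  have IH: "?ac \<in> anc E r ?a"
    "\<And>w. ?ac \<in> anc E r w \<Longrightarrow> w \<in> anc E r ?a \<Longrightarrow> w \<noteq> ?ac \<Longrightarrow> w \<in> \<Union>(Xs ` Bset V E r F ?ac)"
    using step.IH aVy by blast+
  have y'B: "y' \<in> Bset V E r F ?ac" using Bset_iff y'F IH(1) by blast
  show ?case
  proof (intro conjI ballI allI impI)
    show "y' \<in> F" using y'F .
    fix x assume x: "x \<in> Vl E y'"
    have xV: "x \<in> V" using lnk_facts(1)[OF lk] x by blast
    have ax: "?a \<in> anc E r x" using lnk_facts(3)[OF lk x] .
    show acx: "?ac \<in> anc E r x" using anc_trans[OF xV ax IH(1)] .
    fix w assume w: "?ac \<in> anc E r w" "w \<in> anc E r x" "w \<noteq> ?ac"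
    from anc_lin[OF xV w(2) ax] show "w \<in> \<Union>(Xs ` Bset V E r F ?ac)"
    proof
      assume "w \<in> anc E r ?a"
      then show ?thesis using IH(2) w by blast
    next
      assume aw: "?a \<in> anc E r w"
      show ?thesis
      proof (cases "w = ?a")
        case True
        then show ?thesis using IH(2) w anc_refl lnk_facts(1,2)[OF lk] by blast
      next
        case False
        have "w \<in> Xs y'" using lnk_facts(4)[OF lk x aw w(2)] False unfolding Xs_def by blast
        then show ?thesis using y'B by blast
      qed
    qed
  qed
qed

lemma sib_core:
  assumes u1U: "u1 \<in> U" and u2U: "u2 \<in> U" and u12: "u1 \<noteq> u2"
    and a1: "(m, c1) \<in> A_u E r u1 (Fsel u1)" and a2: "(m, c2) \<in> A_u E r u2 (Fsel u2)"
    and cy: "(c1, y) \<in> R\<^sup>*" and cz: "(c2, z) \<in> R\<^sup>*" and xy: "x \<in> Vl E y" and xz: "x \<in> Vl E z"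
    and s12: "apex E r c1 \<in> anc E r (apex E r c2)" "apex E r c1 \<noteq> apex E r c2"
  shows False
proof -
  let ?s1 = "apex E r c1"
  let ?s2 = "apex E r c2"
  let ?t = "tt u2"
  let ?b = "bb u2"
  let ?S = "Fsel u2"
  have bV: "?b \<in> V" using up_facts(2)[OF u2U] .
  have s2U: "?s2 \<in> Xs u2" and LX: "\<forall>g\<in>Xul u2 ?S m. g \<in> anc E r ?s2" and mS: "m \<in> ?S"
    using A1[OF u2U a2] by auto
  have s1U1: "?s1 \<in> Xs u1" and s1m: "?s1 \<in> Xs m" and c1F: "c1 \<in> F" and c2F: "c2 \<in> F" and mF: "m \<in> F"
    using A1[OF u1U a1] A1[OF u2U a2] by auto
  have lkm: "lnk m" using mF solF L_lnk by blast
  have C1: "?s1 \<in> anc E r x"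
    "\<And>w. ?s1 \<in> anc E r w \<Longrightarrow> w \<in> anc E r x \<Longrightarrow> w \<noteq> ?s1 \<Longrightarrow> w \<in> \<Union>(Xs ` Bset V E r F ?s1)"
    using chainL[OF cy c1F] xy by blast+
  have s2x: "?s2 \<in> anc E r x" using chainL[OF cz c2F] xz by blast
  have s2b: "?t \<in> anc E r ?s2" "?s2 \<in> anc E r ?b" "?s2 \<noteq> ?t" using s2U up_facts(7)[OF u2U] by auto
  have s2V: "?s2 \<in> V" using anc_V[OF bV] s2b by blast
  have s1V: "?s1 \<in> V" using anc_V[OF s2V] s12 by blast
  have tV: "?t \<in> V" using anc_V[OF bV] up_facts(3)[OF u2U] by blast
  have xV: "x \<in> V" using anc_V s2x by (metis lnk_facts(1) xz cz c2F chainL solF L_lnk subsetD)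
  have s1t: "?s1 \<in> anc E r ?t"
  proof -
    from anc_lin[OF s2V s2b(1) s12(1)] show ?thesis
    proof
      assume ts1: "?t \<in> anc E r ?s1"
      show ?thesis
      proof (cases "?t = ?s1")
        case True then show ?thesis using anc_refl tV by simp
      next
        case False
        have "?s1 \<in> anc E r ?b" using anc_trans[OF bV s2b(2) s12(1)] .
        then have "?s1 \<in> Xs u2" using ts1 False up_facts(7)[OF u2U] by auto
        then have "edg ?s1 \<in> Pl E u1 \<inter> Pl E u2" using s1U1 Pl_Xs up_facts(6)[OF u1U] up_facts(6)[OF u2U] by auto
        then show ?thesis using Udisj u1U u2U u12 by blast
      qed
    qed simp
  qed
  have ncov: "\<not> Xs u2 \<subseteq> \<Union>(Xs ` Bset V E r F ?s1)"
  proof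
    assume h: "Xs u2 \<subseteq> \<Union>(Xs ` Bset V E r F ?s1)"
    have "Pl E u2 \<subseteq> \<Union>(Pl E ` Bset V E r F ?s1)"
      using cover_iff[OF up_facts(5)[OF u2U] Bset_L] h by blast
    then have d1: "depth E r ?s1 \<le> depth E r (v_of V E r F u2)" using vof(2)[OF u2U s1t] by blast
    have "m \<in> Bset V E r F (v_of V E r F u2)" using Fsel_facts(1)[OF u2U] mS by blast
    then have vm: "v_of V E r F u2 \<in> anc E r (apex E r m)" using Bset_iff by blast
    have ms1: "apex E r m \<in> anc E r ?s1" "apex E r m \<noteq> ?s1" using Xs_anc[OF lkm s1m] by auto
    have amV: "apex E r m \<in> V" using anc_V[OF s1V] ms1 by blast
    have "depth E r (v_of V E r F u2) \<le> depth E r (apex E r m)" using anc_depth[OF amV vm] .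
    moreover have "depth E r (apex E r m) < depth E r ?s1" using anc_less[OF s1V ms1] .
    ultimately show False using d1 by simp
  qed
  have "Xs u2 \<subseteq> \<Union>(Xs ` Bset V E r F ?s1)"
  proof
    fix w assume wU: "w \<in> Xs u2"
    have wV: "w \<in> V" using Xs_u_V[OF u2U wU] .
    have w3: "?t \<in> anc E r w" "w \<in> anc E r ?b" "w \<noteq> ?t" using wU up_facts(7)[OF u2U] by auto
    have s1w: "?s1 \<in> anc E r w" using anc_trans[OF wV w3(1) s1t] .
    show "w \<in> \<Union>(Xs ` Bset V E r F ?s1)"
    proof (cases "w \<in> anc E r ?s2")
      case True
      have wx: "w \<in> anc E r x" using anc_trans[OF xV s2x True] .
      have "w \<noteq> ?s1"
      proof
        assume "w = ?s1"
        then have "?t = w" using anc_antisym[OF tV s1t] w3(1) by simp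
        then show False using w3(3) by simp
      qed
      then show ?thesis using C1(2)[OF s1w wx] by blast
    next
      case notws2: False
      show ?thesis
      proof (cases "\<exists>l\<in>?S - {m}. w \<in> Xs l")
        case True
        then obtain l where lS: "l \<in> ?S" "l \<noteq> m" and wl: "w \<in> Xs l" by blast
        have lF: "l \<in> F" using lS Fsel_facts(2)[OF u2U] by blast
        have lkl: "lnk l" using lF solF L_lnk by blast
        show ?thesis
        proof (cases "?s1 \<in> anc E r (apex E r l)")
          case True
          then have "l \<in> Bset V E r F ?s1" using Bset_iff lF by blast
          then show ?thesis using wl by blast
        next
          case False
          have alw: "apex E r l \<in> anc E r w" using Xs_anc[OF lkl wl] by blast
          have als1: "apex E r l \<in> anc E r ?s1" using anc_lin[OF wV alw s1w] False by blast
          obtain g where g: "g \<in> Xul u2 ?S m" using Xul_ne[OF u2U mS] by blast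
          have gs2: "g \<in> anc E r ?s2" using LX g by blast
          have gU: "g \<in> Xs u2" using Xul_sub[OF u2U mS] g by blast
          have gV: "g \<in> V" using Xs_u_V[OF u2U gU] .
          have tg: "?t \<in> anc E r g" using gU up_facts(7)[OF u2U] by auto
          have s1g: "?s1 \<in> anc E r g" using anc_trans[OF gV tg s1t] .
          have alg: "apex E r l \<in> anc E r g" using anc_trans[OF gV s1g als1] .
          have gne: "g \<noteq> apex E r l" using False s1g by blast
          have s2w: "?s2 \<in> anc E r w" using anc_lin[OF bV s2b(2) w3(2)] notws2 by blast
          have gw: "g \<in> anc E r w" using anc_trans[OF wV s2w gs2] .
          have "w \<in> Vl E l" using wl unfolding Xs_def by blast
          then have "g \<in> Vl E l" using lnk_facts(4)[OF lkl _ alg gw] by blast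
          then have "g \<in> Xs l" using gne unfolding Xs_def by blast
          then show ?thesis using Xul_notin[OF lS(1) lS(2) g] by blast
        qed
      next
        case False
        then have "w \<in> Xul u2 ?S m" using wU unfolding Xul_def by blast
        then have "w \<in> anc E r ?s2" using LX by blast
        then show ?thesis using notws2 by blast
      qed
    qed
  qed
  then show False using ncov by blast
qed

lemma sibling:
  assumes a1: "(m, c1) \<in> R" and a2: "(m, c2) \<in> R" and ne: "c1 \<noteq> c2"
    and cy: "(c1, y) \<in> R\<^sup>*" and cz: "(c2, z) \<in> R\<^sup>*" and xy: "x \<in> Vl E y" and xz: "x \<in> Vl E z"
  shows False
proof -
  obtain u1 where u1U: "u1 \<in> U" and b1: "(m, c1) \<in> A_u E r u1 (Fsel u1)" using a1 R_iff by blast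
  obtain u2 where u2U: "u2 \<in> U" and b2: "(m, c2) \<in> A_u E r u2 (Fsel u2)" using a2 R_iff by blast
  have u12: "u1 \<noteq> u2" using OutSame[OF u1U b1] b2 ne by blast
  have c1F: "c1 \<in> F" and c2F: "c2 \<in> F" using A1[OF u1U b1] A1[OF u2U b2] by auto
  have s1x: "apex E r c1 \<in> anc E r x" using chainL[OF cy c1F] xy by blast
  have s2x: "apex E r c2 \<in> anc E r x" using chainL[OF cz c2F] xz by blast
  have lkz: "lnk z" using chainL[OF cz c2F] solF L_lnk by blast
  have xV: "x \<in> V" using lnk_facts(1)[OF lkz] xz by blast
  have X1: "apex E r c1 \<in> Xs u1" and X2: "apex E r c2 \<in> Xs u2" using A1[OF u1U b1] A1[OF u2U b2] by auto
  show False
  proof (cases "apex E r c1 = apex E r c2")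
    case True
    then have "edg (apex E r c1) \<in> Pl E u1 \<inter> Pl E u2"
      using X1 X2 Pl_Xs up_facts(6)[OF u1U] up_facts(6)[OF u2U] by auto
    then show False using Udisj u1U u2U u12 by blast
  next
    case False
    from anc_lin[OF xV s1x s2x] show False
    proof
      assume "apex E r c1 \<in> anc E r (apex E r c2)"
      then show False using sib_core[OF u1U u2U u12 b1 b2 cy cz xy xz] False by blast
    next
      assume "apex E r c2 \<in> anc E r (apex E r c1)"
      then show False using sib_core[OF u2U u1U u12[symmetric] b2 b1 cz cy xz xy] False by metis
    qed
  qed
qed

lemma indeg: "(a, c) \<in> R \<Longrightarrow> (b, c) \<in> R \<Longrightarrow> a = b"
  using R_iff InDeg by metis

lemma anc_comp: assumes "(b, y) \<in> R\<^sup>*" shows "(a, y) \<in> R\<^sup>* \<Longrightarrow> (a, b) \<in> R\<^sup>* \<or> (b, a) \<in> R\<^sup>*"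
  using assms
proof (induction arbitrary: a rule: rtrancl_induct)
  case base then show ?case by blast
next
  case (step y z)
  from step.prems show ?case
  proof (cases rule: rtranclE)
    case base
    then show ?thesis using step.hyps by (meson rtrancl.rtrancl_into_rtrancl)
  next
    case (step y')
    then have "y' = y" using indeg step.hyps(2) by blast
    then show ?thesis using step.IH step by blast
  qed
qed

lemma common: assumes "(l0, x) \<in> (R \<union> R\<inverse>)\<^sup>*" shows "\<exists>\<rho>. (\<rho>, l0) \<in> R\<^sup>* \<and> (\<rho>, x) \<in> R\<^sup>*"
  using assms
proof (induction rule: rtrancl_induct)
  case base then show ?case by blast
next
  case (step y z)
  then obtain \<rho> where \<rho>: "(\<rho>, l0) \<in> R\<^sup>*" "(\<rho>, y) \<in> R\<^sup>*" by blast
  from step.hyps(2) show ?case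
  proof
    assume "(y, z) \<in> R"
    then show ?thesis using \<rho> by (meson rtrancl.rtrancl_into_rtrancl)
  next
    assume zy: "(y, z) \<in> R\<inverse>"
    then have zy: "(z, y) \<in> R" by simp
    from \<rho>(2) show ?thesis
    proof (cases rule: rtranclE)
      case base
      then have "(z, l0) \<in> R\<^sup>*" using \<rho>(1) zy by (meson converse_rtrancl_into_rtrancl)
      then show ?thesis by blast
    next
      case (step y')
      then have "y' = z" using indeg zy by blast
      then show ?thesis using \<rho> step by blast
    qed
  qed
qed

lemma final: assumes "(\<rho>, l1) \<in> R\<^sup>*" "x \<in> Vl E l1"
  shows "(\<rho>, l2) \<in> R\<^sup>* \<Longrightarrow> x \<in> Vl E l2 \<Longrightarrow> (l1, l2) \<in> R\<^sup>* \<or> (l2, l1) \<in> R\<^sup>*"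
  using assms(1)
proof (induction rule: converse_rtrancl_induct)
  case base then show ?case by blast
next
  case (step \<rho> c1)
  from step.prems(1) show ?case
  proof (cases rule: converse_rtranclE)
    case base
    then have "(l2, l1) \<in> R\<^sup>*" using step.hyps by (meson converse_rtrancl_into_rtrancl)
    then show ?thesis by blast
  next
    case (step c2)
    show ?thesis
    proof (cases "c1 = c2")
      case True then show ?thesis using step.IH step step.prems by blast
    next
      case False
      then show ?thesis using sibling[OF step.hyps(1) step(1) False step.hyps(2) step(2) assms(2) step.prems(2)] by blast
    qed
  qed
qed

end

theorem lemma12:
  fixes V :: "'a set" and E :: "'a set set" and L :: "'a set set"
    and w :: "'a set \<Rightarrow> real" and r :: 'a and F :: "'a set set"
    and U :: "'a set set" and Fsel :: "'a set \<Rightarrow> 'a set set"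
    and C :: "'a set set" and A :: "('a set \<times> 'a set) set"
    and l0 l1 l2 :: "'a set"
  assumes tree: "is_spanning_tree V E"
    and links: "L \<subseteq> {{x, y} | x y. x \<in> V \<and> y \<in> V \<and> x \<noteq> y}"
    and weights: "\<forall>l\<in>L. w l > 0"
    and root: "r \<in> V"
    and sol: "F \<subseteq> L" "\<Union>(Pl E ` F) = E"
    and Uup: "U \<subseteq> L_up E r L"
    and Udisj: "\<forall>u\<in>U. \<forall>u'\<in>U. u \<noteq> u' \<longrightarrow> Pl E u \<inter> Pl E u' = {}"
    and Fsel: "\<forall>u\<in>U. valid_Fu V E r F u (Fsel u)"
    and comp: "l0 \<in> F" "C = {x. (l0, x) \<in> (dep_arcs E r U Fsel \<union> (dep_arcs E r U Fsel)\<inverse>)\<^sup>*}"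
    and arcs: "A = dep_arcs E r U Fsel \<inter> (C \<times> C)"
    and l12: "l1 \<in> C" "l2 \<in> C" "Vl E l1 \<inter> Vl E l2 \<noteq> {}"
  shows "(l1, l2) \<in> A\<^sup>* \<or> (l2, l1) \<in> A\<^sup>*"
proof -
  interpret wtap V E r L F U Fsel
    using tree root links sol Uup Udisj Fsel by unfold_locales auto
  let ?R = "dep_arcs E r U Fsel"
  obtain x where x: "x \<in> Vl E l1" "x \<in> Vl E l2" using l12(3) by blast
  have c1: "(l0, l1) \<in> (?R \<union> ?R\<inverse>)\<^sup>*" and c2: "(l0, l2) \<in> (?R \<union> ?R\<inverse>)\<^sup>*" using comp l12 by auto
  obtain \<rho>1 where r1: "(\<rho>1, l0) \<in> ?R\<^sup>*" "(\<rho>1, l1) \<in> ?R\<^sup>*" using common[OF c1] by blast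
  obtain \<rho>2 where r2: "(\<rho>2, l0) \<in> ?R\<^sup>*" "(\<rho>2, l2) \<in> ?R\<^sup>*" using common[OF c2] by blast
  have "\<exists>\<rho>. (\<rho>, l1) \<in> ?R\<^sup>* \<and> (\<rho>, l2) \<in> ?R\<^sup>*"
  proof -
    from anc_comp[OF r1(1) r2(1)] show ?thesis
    proof
      assume "(\<rho>2, \<rho>1) \<in> ?R\<^sup>*"
      then show ?thesis using r1 r2 by (meson rtrancl_trans)
    next
      assume "(\<rho>1, \<rho>2) \<in> ?R\<^sup>*"
      then show ?thesis using r1 r2 by (meson rtrancl_trans)
    qed
  qed
  then obtain \<rho> where "(\<rho>, l1) \<in> ?R\<^sup>*" "(\<rho>, l2) \<in> ?R\<^sup>*" by blast
  then have fin: "(l1, l2) \<in> ?R\<^sup>* \<or> (l2, l1) \<in> ?R\<^sup>*" using final x by blast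
  have toA: "(a, b) \<in> A\<^sup>* \<and> b \<in> C" if ab: "(a, b) \<in> ?R\<^sup>*" and aC: "a \<in> C" for a b
    using ab
  proof (induction rule: rtrancl_induct)
    case base then show ?case using aC by simp
  next
    case (step b c)
    then have bC: "b \<in> C" by blast
    then have "(l0, b) \<in> (?R \<union> ?R\<inverse>)\<^sup>*" using comp by blast
    then have "(l0, c) \<in> (?R \<union> ?R\<inverse>)\<^sup>*" using step.hyps(2) by (meson UnI1 rtrancl.rtrancl_into_rtrancl)
    then have cC: "c \<in> C" using comp by blast
    then have "(b, c) \<in> A" using arcs bC step.hyps(2) by blast
    then show ?case using step.IH cC by (meson rtrancl.rtrancl_into_rtrancl)
  qed
  show ?thesis using fin toA l12 by blast
qed

end
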